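(* Under the hypotheses of the existence setting (see context), let $e\in W^{s,G}(\mathbb{R}^N)$ be a fixed nonnegative function, independent of $\lambda$, with $\|e\|_{G_{N/s}}>0$ and $I_\lambda(e)<0$ for the relevant $\lambda$ (as provided by the mountain pass geometry), and for $\lambda>0$ let $$c_\lambda=\inf_{\gamma\in\Gamma}\max_{t\in[0,1]}I_\lambda(\gamma(t)),\qquad \Gamma=\{\gamma\in C([0,1],W^{s,G}(\mathbb{R}^N)):\gamma(0)=0,\ \gamma(1)=e\}.$$ Then $\lim_{\lambda\to\infty}c_\lambda=0$.
   Context: A Young function is $G(t)=\int_0^t g(\tau)\,d\tau$, with $g$ right-continuous, nondecreasing, $g(0)=0$, $g>0$ on $(0,\infty)$, $g(t)\to\infty$. (G1): $1<p^-\le \frac{tg(t)}{G(t)}\le p^+<\infty$ for all $t>0$. (G2): $\int^{\infty}(t/G(t))^{\frac{s}{N-s}}dt=\infty$; (G3): $\int_0(t/G(t))^{\frac{s}{N-s}}dt<\infty$. $H(t)=\big(\int_0^t(\tau/G(\tau))^{\frac{s}{N-s}}d\tau\big)^{\frac{N-s}{s}}$, $G_{\frac{N}{s}}=G\circ H^{-1}$. $N\ge2$, $s\in(0,1)$, $sp^-<N$, $p_*^-=\frac{Np^-}{N-sp^-}$. $D^su(x,y)=\frac{u(x)-u(y)}{|x-y|^s}$, $\Phi_G(u)=\int G(|u|)dx$, $\Phi_{s,G}(u)=\iint G(|D^su|)\frac{dxdy}{|x-y|^N}$, $\rho=\Phi_G+\Phi_{s,G}$, $W^{s,G}(\mathbb{R}^N)=\{u:\rho(u)<\infty\}$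 with $\|u\|_{s,G}=\inf\{\lambda>0:\rho(u/\lambda)\le1\}$; for a Young function $A$, $\|u\|_A=\inf\{\lambda>0:\int A(|u|/\lambda)\le1\}$. $f:\mathbb{R}\to\mathbb{R}$ continuous with (f1) $\lim_{t\to0}f(t)/g(t)=0$; (f2) $\limsup_{t\to\infty}|f(t)|/m(|t|)<\infty$, where $m$ is continuous, $M(t)=\int_0^tm$ is a Young function and $0<m^-\le tm(t)/M(t)\le m^+$ with $p^+<m^-<m^+<p_*^-$; (f3) there is $\theta>p^+$ with $0<\theta F(t)\le f(t)t$ for $t\ne0$, $F(t)=\int_0^tf$. $I_\lambda(u)=\Phi_{s,G}(u)+\Phi_G(u)-\int G_{\frac{N}{s}}(|u|)dx-\lambda\int F(u)dx$. *)

theory Defs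
  imports "HOL-Analysis.Analysis"
begin

definition young_density :: "(real \<Rightarrow> real) \<Rightarrow> bool" where
  "young_density g \<longleftrightarrow>
     (\<forall>t\<ge>0. continuous (at_right t) g) \<and> mono_on {0..} g \<and> g 0 = 0 \<and>
     (\<forall>t>0. g t > 0) \<and> filterlim g at_top at_top"

definition prim :: "(real \<Rightarrow> real) \<Rightarrow> real \<Rightarrow> real" where
  "prim g t = (LBINT \<tau>=0..t. g \<tau>)"

definition Hfun :: "(real \<Rightarrow> real) \<Rightarrow> real \<Rightarrow> real \<Rightarrow> real \<Rightarrow> real" where
  "Hfun g s N t = (LBINT \<tau>=0..t. (\<tau> / prim g \<tau>) powr (s / (N - s))) powr ((N - s) / s)"

definition GNs :: "(real \<Rightarrow> real) \<Rightarrow> real \<Rightarrow> real \<Rightarrow> real \<Rightarrow> real" where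
  "GNs g s N t = prim g (the_inv_into {0..} (Hfun g s N) t)"

definition Phi_G :: "(real \<Rightarrow> real) \<Rightarrow> ('a::euclidean_space \<Rightarrow> real) \<Rightarrow> ennreal" where
  "Phi_G G u = (\<integral>\<^sup>+ x. ennreal (G \<bar>u x\<bar>) \<partial>lborel)"

definition Phi_sG :: "(real \<Rightarrow> real) \<Rightarrow> real \<Rightarrow> ('a::euclidean_space \<Rightarrow> real) \<Rightarrow> ennreal" where
  "Phi_sG G s u = (\<integral>\<^sup>+ z. ennreal (G (\<bar>u (fst z) - u (snd z)\<bar> / dist (fst z) (snd z) powr s)
        / dist (fst z) (snd z) powr real DIM('a)) \<partial>(lborel \<Otimes>\<^sub>M lborel))"

definition rho :: "(real \<Rightarrow> real) \<Rightarrow> real \<Rightarrow> ('a::euclidean_space \<Rightarrow> real) \<Rightarrow> ennreal" where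
  "rho G s u = Phi_G G u + Phi_sG G s u"

definition Wspace :: "(real \<Rightarrow> real) \<Rightarrow> real \<Rightarrow> ('a::euclidean_space \<Rightarrow> real) set" where
  "Wspace G s = {u. u \<in> borel_measurable lborel \<and> rho G s u < \<infinity>}"

definition sG_norm :: "(real \<Rightarrow> real) \<Rightarrow> real \<Rightarrow> ('a::euclidean_space \<Rightarrow> real) \<Rightarrow> real" where
  "sG_norm G s u = Inf {l. l > 0 \<and> rho G s (\<lambda>x. u x / l) \<le> 1}"

definition orlicz_norm :: "(real \<Rightarrow> real) \<Rightarrow> ('a::euclidean_space \<Rightarrow> real) \<Rightarrow> real" where
  "orlicz_norm A u = Inf {l. l > 0 \<and> (\<integral>\<^sup>+ x. ennreal (A (\<bar>u x\<bar> / l)) \<partial>lborel) \<le> 1}"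

definition I_fun :: "(real \<Rightarrow> real) \<Rightarrow> (real \<Rightarrow> real) \<Rightarrow> real \<Rightarrow> real \<Rightarrow> ('a::euclidean_space \<Rightarrow> real) \<Rightarrow> real" where
  "I_fun g f s lam u =
     (\<integral>z. prim g (\<bar>u (fst z) - u (snd z)\<bar> / dist (fst z) (snd z) powr s)
        / dist (fst z) (snd z) powr real DIM('a) \<partial>(lborel \<Otimes>\<^sub>M lborel))
     + (\<integral>x. prim g \<bar>u x\<bar> \<partial>lborel)
     - (\<integral>x. GNs g s (real DIM('a)) \<bar>u x\<bar> \<partial>lborel)
     - lam * (\<integral>x. prim f (u x) \<partial>lborel)"

definition Gamma_paths :: "(real \<Rightarrow> real) \<Rightarrow> real \<Rightarrow> ('a::euclidean_space \<Rightarrow> real) \<Rightarrow> (real \<Rightarrow> 'a \<Rightarrow> real) set" where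
  "Gamma_paths g s e = {\<gamma>. \<gamma> 0 = (\<lambda>x. 0) \<and> \<gamma> 1 = e \<and>
      (\<forall>t\<in>{0..1}. \<gamma> t \<in> Wspace (prim g) s) \<and>
      (\<forall>t0\<in>{0..1}. ((\<lambda>t. sG_norm (prim g) s (\<lambda>x. \<gamma> t x - \<gamma> t0 x)) \<longlongrightarrow> 0) (at t0 within {0..1}))}"

definition mp_level :: "(real \<Rightarrow> real) \<Rightarrow> (real \<Rightarrow> real) \<Rightarrow> real \<Rightarrow> ('a::euclidean_space \<Rightarrow> real) \<Rightarrow> real \<Rightarrow> real" where
  "mp_level g f s e lam = (INF \<gamma>\<in>Gamma_paths g s e. SUP t\<in>{0..1}. I_fun g f s lam (\<gamma> t))"

end

theory Submission
  imports Defs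
begin


lemma yd_mono: "young_density g \<Longrightarrow> 0 \<le> x \<Longrightarrow> x \<le> y \<Longrightarrow> g x \<le> g y"
  unfolding young_density_def mono_on_def by auto

lemma yd_nonneg: "young_density g \<Longrightarrow> 0 \<le> x \<Longrightarrow> 0 \<le> g x"
  unfolding young_density_def by (metis less_eq_real_def)

lemma yd_set_integrable:
  assumes yd: "young_density g" and a: "0 \<le> a"
  shows "set_integrable lborel {a..b} g"
proof -
  define g' where "g' = (\<lambda>x. g (max 0 x))"
  have "mono g'" unfolding mono_def g'_def using yd_mono[OF yd] by auto
  hence gm: "g' \<in> borel_measurable borel" by (rule borel_measurable_mono)
  have ci: "set_integrable lborel {a..b} (\<lambda>x. g' b)"
    by (rule borel_integrable_atLeastAtMost') auto
  have "set_integrable lborel {a..b} g'"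
  proof (rule set_integrable_bound[OF ci])
    show "set_borel_measurable lborel {a..b} g'" unfolding set_borel_measurable_def
      using gm by measurable
    show "AE x in lborel. x \<in> {a..b} \<longrightarrow> norm (g' x) \<le> norm (g' b)"
      using a yd_mono[OF yd] yd_nonneg[OF yd] by (auto simp: g'_def)
  qed
  then show ?thesis
    by (rule set_integrable_cong[THEN iffD1, rotated -1]) (use a in \<open>auto simp: g'_def\<close>)
qed



locale gctx = fixes g :: "real \<Rightarrow> real" assumes yd: "young_density g"
begin

lemma g_int_on: "0 \<le> a \<Longrightarrow> g integrable_on {a..b}"
  using set_borel_integral_eq_integral(1)[OF yd_set_integrable[OF yd]] by blast

lemma G_eq: "0 \<le> t \<Longrightarrow> prim g t = integral {0..t} g"
  using interval_integral_eq_integral[of 0 t g] yd_set_integrable[OF yd, of 0 t] by (simp add: prim_def zero_ereal_def)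

lemma G_diff: "0 \<le> x \<Longrightarrow> x \<le> y \<Longrightarrow> prim g y - prim g x = integral {x..y} g"
  using Henstock_Kurzweil_Integration.integral_combine[where a=0 and c=x and b=y and f=g] g_int_on[of 0 y] G_eq[of x] G_eq[of y] by auto

lemma G_diff_bounds:
  assumes "0 \<le> x" "x \<le> y"
  shows "(y - x) * g x \<le> prim g y - prim g x" "prim g y - prim g x \<le> (y - x) * g y"
proof -
  have i: "g integrable_on {x..y}" using assms g_int_on by auto
  have "integral {x..y} (\<lambda>_. g x) \<le> integral {x..y} g"
    by (rule integral_le) (use i assms yd_mono[OF yd] in auto)
  then show "(y - x) * g x \<le> prim g y - prim g x" using G_diff[OF assms] assms by simp
  have "integral {x..y} g \<le> integral {x..y} (\<lambda>_. g y)"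
    by (rule integral_le) (use i assms yd_mono[OF yd] in auto)
  then show "prim g y - prim g x \<le> (y - x) * g y" using G_diff[OF assms] assms by simp
qed

lemma g0[simp]: "g 0 = 0" using yd unfolding young_density_def by auto

lemma G0[simp]: "prim g 0 = 0" using G_eq[of 0] by simp

lemma G_nonneg: "0 \<le> x \<Longrightarrow> 0 \<le> prim g x"
  using G_diff_bounds(1)[of 0 x] yd_nonneg[OF yd, of 0] by simp

lemma G_mono: "0 \<le> x \<Longrightarrow> x \<le> y \<Longrightarrow> prim g x \<le> prim g y"
proof -
  assume a: "0 \<le> x" "x \<le> y"
  have "0 \<le> (y - x) * g x" using a yd_nonneg[OF yd, of x] by simp
  then show ?thesis using G_diff_bounds(1)[OF a] by linarith
qed

lemma g_pos: "0 < x \<Longrightarrow> 0 < g x" using yd unfolding young_density_def by auto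

lemma G_pos: "0 < x \<Longrightarrow> 0 < prim g x"
proof -
  assume a: "0 < x"
  have "0 < (x - x/2) * g (x/2)" using a g_pos[of "x/2"] by simp
  then show ?thesis using G_diff_bounds(1)[of "x/2" x] G_nonneg[of "x/2"] a by linarith
qed

lemma G_le: "0 \<le> x \<Longrightarrow> prim g x \<le> x * g x"
  using G_diff_bounds(2)[of 0 x] by simp

lemma aux_scale:
  fixes a b x y P :: real
  assumes "0 < y" "y \<le> x" "(x - y) * b \<le> P - a" "a \<le> y * b"
  shows "a * x \<le> y * P"
proof -
  have 1: "a * (x - y) \<le> (y * b) * (x - y)" using assms by (intro mult_right_mono) auto
  have 2: "y * ((x - y) * b) \<le> y * (P - a)" using assms by (intro mult_left_mono) auto
  have e1: "a * (x - y) = a * x - a * y" by (rule right_diff_distrib)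
  have e2: "(y * b) * (x - y) = y * ((x - y) * b)" by (simp only: mult_ac)
  have e3: "y * (P - a) = y * P - y * a" by (rule right_diff_distrib)
  have e4: "a * y = y * a" by (rule mult.commute)
  show ?thesis using 1 2 e1 e2 e3 e4 by linarith
qed

lemma G_scale_down:
  assumes c: "0 \<le> c" "c \<le> 1" and x: "0 \<le> x"
  shows "prim g (c * x) \<le> c * prim g x"
proof (cases "c * x = 0")
  case True then have "prim g (c*x) = 0" by (simp only: G0)
  then show ?thesis using mult_nonneg_nonneg[OF c(1) G_nonneg[OF x]] by linarith
next
  case False
  then have y: "0 < c * x" using c x by (simp add: less_le)
  have xy: "c * x \<le> x" using c x by (simp add: mult_left_le_one_le)
  have A1: "(x - c*x) * g (c*x) \<le> prim g x - prim g (c*x)"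
    using G_diff_bounds(1)[OF _ xy] y by auto
  have A2: "prim g (c*x) \<le> c * x * g (c*x)" using G_le y by auto
  have "prim g (c*x) * x \<le> (c * x) * prim g x" by (rule aux_scale[OF y xy A1 A2])
  then have "prim g (c*x) * x \<le> (c * prim g x) * x" by (simp only: mult_ac)
  moreover have "0 < x" using y c x by (metis less_le mult_zero_right order.strict_trans1 mult_left_le_one_le)
  ultimately show ?thesis by (rule mult_right_le_imp_le)
qed

lemma G_tendsto0:
  assumes "(a \<longlongrightarrow> 0) F" "\<forall>\<^sub>F n in F. 0 \<le> a n"
  shows "((\<lambda>n. prim g (a n)) \<longlongrightarrow> 0) F"
proof (rule tendsto_sandwich[where f="\<lambda>_. 0" and h="\<lambda>n. a n * g 1"])
  have "\<forall>\<^sub>F n in F. a n < 1" using assms(1) by (rule order_tendstoD) simp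
  with assms(2) show "\<forall>\<^sub>F n in F. prim g (a n) \<le> a n * g 1"
  proof eventually_elim
    case (elim n)
    have "a n * g (a n) \<le> a n * g 1" using elim yd_mono[OF yd, of "a n" 1] by (intro mult_left_mono) auto
    then show ?case using G_le[of "a n"] elim by linarith
  qed
  show "\<forall>\<^sub>F n in F. 0 \<le> prim g (a n)" using assms(2) by eventually_elim (rule G_nonneg)
  show "((\<lambda>n. a n * g 1) \<longlongrightarrow> 0) F" using tendsto_mult[OF assms(1) tendsto_const] by simp
qed simp

lemma G_meas: "(\<lambda>x. prim g (max 0 x)) \<in> borel_measurable borel"
  by (rule borel_measurable_mono) (auto simp: mono_def intro!: G_mono)

end

locale gctx1 = gctx + fixes pp :: real
  assumes pp: "\<forall>t>0. t * g t / prim g t \<le> pp"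
begin

lemma G_doubling_step:
  assumes x: "0 \<le> x" and pp0: "0 < pp"
  shows "prim g ((1 + 1/(2*pp)) * x) \<le> 2 * prim g x"
proof (cases "x = 0")
  case True then show ?thesis by simp
next
  case False
  define h where "h = 1/(2*pp)"
  have h: "0 < h" "h * pp = 1/2" unfolding h_def using pp0 by simp_all
  define y where "y = (1 + h) * x"
  have ymx: "y - x = h * x" by (simp only: y_def distrib_right mult_1_left add_diff_cancel_left')
  have x0: "0 < x" using x False by simp
  have xy: "x \<le> y" "0 < y"
    using ymx mult_pos_pos[OF h(1) x0] apply linarith
    using mult_pos_pos[of "1+h" x] h(1) x0 unfolding y_def by linarith
  have a1: "prim g y - prim g x \<le> (y - x) * g y" using G_diff_bounds(2)[OF x xy(1)] .
  have a2: "h * x * g y \<le> h * y * g y"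
    using xy h yd_nonneg[OF yd, of y] by (intro mult_right_mono) auto
  have a3': "y * g y / prim g y \<le> pp" using pp xy(2) by blast
  have a3: "y * g y \<le> pp * prim g y"
    using a3' G_pos[OF xy(2)] by (simp add: pos_divide_le_eq mult.commute)
  have a4: "h * (y * g y) \<le> h * (pp * prim g y)" using a3 h by (intro mult_left_mono) auto
  have a5: "h * (pp * prim g y) = prim g y / 2"
    by (simp only: mult.assoc[symmetric] h(2))
  have "prim g y - prim g x \<le> prim g y / 2"
    using a1 a2 a4 a5 unfolding ymx by (simp add: mult.assoc)
  then have "prim g y \<le> 2 * prim g x" by linarith
  moreover have "(1 + 1/(2*pp)) * x = y" unfolding y_def h_def ..
  ultimately show ?thesis by (metis)
qed

lemma G_doubling:
  assumes c: "1 \<le> c" and pp0: "0 < pp"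
  shows "\<exists>K>0. \<forall>x\<ge>0. prim g (c * x) \<le> K * prim g x"
proof -
  define q where "q = 1 + 1/(2*pp)"
  have q: "1 < q" using pp0 by (simp add: q_def)
  have st: "prim g (q * z) \<le> 2 * prim g z" if "0 \<le> z" for z
    using G_doubling_step[OF that pp0] unfolding q_def .
  have it: "prim g (q^n * x) \<le> 2^n * prim g x" if "0 \<le> x" for n x
  proof (induction n)
    case (Suc n)
    have "prim g (q^Suc n * x) = prim g (q * (q^n * x))" by (simp add: algebra_simps)
    also have "\<dots> \<le> 2 * prim g (q^n * x)"
      using st[of "q^n * x"] q that by simp
    also have "\<dots> \<le> 2 * 2^n * prim g x" using Suc by simp
    finally show ?case by simp
  qed simp
  obtain n where n: "c < q^n" using real_arch_pow[OF q] by blast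
  show ?thesis
  proof (intro exI[of _ "2^n"] conjI allI impI)
    fix x :: real assume x: "0 \<le> x"
    have "prim g (c * x) \<le> prim g (q^n * x)"
      using c x n by (intro G_mono) (auto intro: mult_right_mono)
    also have "\<dots> \<le> 2^n * prim g x" by (rule it[OF x])
    finally show "prim g (c * x) \<le> 2^n * prim g x" .
  qed simp
qed

end


locale hctx = gctx +
  fixes s N :: real
  assumes s0: "0 < s" and sN: "s < N"
    and G2: "(\<integral>\<^sup>+ t\<in>{1..}. ennreal ((t / prim g t) powr (s / (N - s))) \<partial>lborel) = \<infinity>"
    and G3: "(\<integral>\<^sup>+ t\<in>{0..1}. ennreal ((t / prim g t) powr (s / (N - s))) \<partial>lborel) < \<infinity>"
begin

definition "aa = s / (N - s)"
definition "phi = (\<lambda>t. (t / prim g (max 0 t)) powr aa)"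

lemma aa_pos: "0 < aa" using s0 sN by (simp add: aa_def)

lemma phi_eq: "0 \<le> t \<Longrightarrow> phi t = (t / prim g t) powr (s / (N - s))"
  by (simp add: phi_def aa_def)

lemma phi_meas[measurable]: "phi \<in> borel_measurable borel"
proof -
  have "(\<lambda>x. prim g (max 0 x)) \<in> borel_measurable borel" by (rule G_meas)
  then show ?thesis unfolding phi_def by measurable
qed

lemma phi_nonneg: "0 \<le> phi t" by (simp add: phi_def)

lemma phi_pos: "0 < t \<Longrightarrow> 0 < phi t"
  using G_pos[of t] by (simp add: phi_def)

lemma G3': "(\<integral>\<^sup>+ t. ennreal (phi t) * indicator {0..1} t \<partial>lborel) < \<infinity>"
proof -
  have "(\<integral>\<^sup>+ t. ennreal (phi t) * indicator {0..1} t \<partial>lborel) =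
        (\<integral>\<^sup>+ t\<in>{0..1}. ennreal ((t / prim g t) powr (s / (N - s))) \<partial>lborel)"
    by (rule nn_integral_cong) (auto simp: phi_eq split: split_indicator)
  then show ?thesis using G3 by simp
qed

lemma G2': "(\<integral>\<^sup>+ t. ennreal (phi t) * indicator {1..} t \<partial>lborel) = \<infinity>"
proof -
  have "(\<integral>\<^sup>+ t. ennreal (phi t) * indicator {1..} t \<partial>lborel) =
        (\<integral>\<^sup>+ t\<in>{1..}. ennreal ((t / prim g t) powr (s / (N - s))) \<partial>lborel)"
    by (rule nn_integral_cong) (auto simp: phi_eq split: split_indicator)
  then show ?thesis using G2 by simp
qed

lemma phi_si01: "set_integrable lborel {0..1} phi"
  unfolding set_integrable_def
proof (rule integrableI_nonneg)
  show "(\<lambda>x. indicator {0..1} x *\<^sub>R phi x) \<in> borel_measurable lborel" by measurable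
  show "AE x in lborel. 0 \<le> indicator {0..1} x *\<^sub>R phi x" by (simp add: phi_nonneg)
  have "(\<integral>\<^sup>+ x. ennreal (indicator {0..1} x *\<^sub>R phi x) \<partial>lborel) =
        (\<integral>\<^sup>+ t. ennreal (phi t) * indicator {0..1} t \<partial>lborel)"
    by (rule nn_integral_cong) (auto split: split_indicator)
  then show "(\<integral>\<^sup>+ x. ennreal (indicator {0..1} x *\<^sub>R phi x) \<partial>lborel) < \<infinity>" using G3' by simp
qed

lemma phi_bound: "1 \<le> t \<Longrightarrow> t \<le> T \<Longrightarrow> phi t \<le> (T / prim g 1) powr aa"
proof -
  assume t: "1 \<le> t" "t \<le> T"
  have G1p: "0 < prim g 1" using G_pos by simp
  have "prim g 1 \<le> prim g t" using t by (intro G_mono) auto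
  then have "t / prim g t \<le> T / prim g 1"
    using t G1p by (intro frac_le) auto
  moreover have "0 \<le> t / prim g t" using t G_nonneg[of t] by simp
  ultimately have "(t / prim g t) powr aa \<le> (T / prim g 1) powr aa"
    using aa_pos by (intro powr_mono2) auto
  then show ?thesis using t by (simp add: phi_def)
qed

lemma phi_si1T: "set_integrable lborel {1..T} phi"
proof (rule set_integrable_bound[where f="\<lambda>_. (T / prim g 1) powr aa"])
  show "set_integrable lborel {1..T} (\<lambda>_. (T / prim g 1) powr aa)"
    by (rule borel_integrable_atLeastAtMost') auto
  show "set_borel_measurable lborel {1..T} phi" unfolding set_borel_measurable_def by measurable
  show "AE x in lborel. x \<in> {1..T} \<longrightarrow> norm (phi x) \<le> norm ((T / prim g 1) powr aa)"
    using phi_bound phi_nonneg by (auto intro!: AE_I2)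
qed

lemma phi_si: "set_integrable lborel {0..b} phi"
proof -
  have "set_integrable lborel ({0..1} \<union> {1..max 1 b}) phi"
    by (rule set_integrable_Un[OF phi_si01 phi_si1T]) auto
  then show ?thesis by (rule set_integrable_subset) auto
qed

lemma phi_int: "phi integrable_on {0..b}"
  using set_borel_integral_eq_integral(1)[OF phi_si] .

definition "J t = integral {0..t} phi"

lemma J_diff: "0 \<le> x \<Longrightarrow> x \<le> y \<Longrightarrow> J y - J x = integral {x..y} phi"
  using Henstock_Kurzweil_Integration.integral_combine[where a=0 and c=x and b=y and f=phi] phi_int[of y]
  by (auto simp: J_def)

lemma J0[simp]: "J 0 = 0" by (simp add: J_def)

lemma J_strict: assumes "0 \<le> x" "x < y" shows "J x < J y"
proof -
  define m where "m = (x + y) / 2"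
  have m: "x < m" "m < y" using assms by (auto simp: m_def)
  have iy: "phi integrable_on {m..y}" by (rule integrable_on_subinterval[OF phi_int[of y]]) (use m assms in auto)
  have lb: "0 < (m / prim g y) powr aa"
    using m assms G_pos[of y] by simp
  have "integral {m..y} (\<lambda>_. (m / prim g y) powr aa) \<le> integral {m..y} phi"
  proof (rule integral_le[OF _ iy])
    show "(\<lambda>_. (m / prim g y) powr aa) integrable_on {m..y}" by (rule integrable_const_ivl)
    show "(m / prim g y) powr aa \<le> phi t" if t: "t \<in> {m..y}" for t
    proof -
      have "prim g t \<le> prim g y" using t m assms by (intro G_mono) auto
      moreover have "0 < prim g t" using t m assms by (intro G_pos) auto
      ultimately have "m / prim g y \<le> t / prim g t"
        using t m assms by (intro frac_le) auto
      then have "(m / prim g y) powr aa \<le> (t / prim g t) powr aa"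
        using m assms aa_pos G_pos[of y] by (intro powr_mono2) auto
      then show "(m / prim g y) powr aa \<le> phi t" using t m assms by (simp add: phi_def)
    qed
  qed
  moreover have "integral {m..y} (\<lambda>_. (m / prim g y) powr aa) = (y - m) * (m / prim g y) powr aa"
    using m by simp
  moreover have "0 < (y - m) * (m / prim g y) powr aa" using lb m by simp
  ultimately have "0 < integral {m..y} phi" by linarith
  moreover have "0 \<le> integral {x..m} phi"
    by (rule integral_nonneg[OF integrable_on_subinterval[OF phi_int[of y]]]) (use m assms phi_nonneg in auto)
  moreover have "integral {x..y} phi = integral {x..m} phi + integral {m..y} phi"
    using Henstock_Kurzweil_Integration.integral_combine[where a=x and c=m and b=y and f=phi]
      integrable_on_subinterval[OF phi_int[of y], of x y] m assms by auto
  ultimately show ?thesis using J_diff[of x y] assms by simp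
qed

lemma J_cont: "continuous_on {0..b} J"
  unfolding J_def by (rule indefinite_integral_continuous_1[OF phi_int])

lemma J_unbounded: "\<exists>T\<ge>0. B < J T"
proof (rule ccontr)
  assume "\<not> ?thesis"
  then have bnd: "\<And>T. 0 \<le> T \<Longrightarrow> J T \<le> B" by (auto simp: not_less)
  define f where "f = (\<lambda>(n::nat) t. ennreal (phi t) * indicator {1..1 + real n} t)"
  have inc: "incseq f"
    unfolding f_def incseq_def le_fun_def
    by (auto intro!: mult_left_mono split: split_indicator)
  have fm: "\<And>i. f i \<in> borel_measurable lborel" unfolding f_def by measurable
  have sup: "(\<lambda>t. SUP i. f i t) = (\<lambda>t. ennreal (phi t) * indicator {1..} t)"
  proof
    fix t
    show "(SUP i. f i t) = ennreal (phi t) * indicator {1..} t"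
    proof (cases "1 \<le> t")
      case True
      obtain n :: nat where n: "t \<le> real n" using real_arch_simple by blast
      have "f n t = ennreal (phi t)" using True n by (simp add: f_def)
      moreover have "f i t \<le> ennreal (phi t)" for i by (simp add: f_def split: split_indicator)
      ultimately have "(SUP i. f i t) = ennreal (phi t)"
        by (intro antisym SUP_least) (auto intro: SUP_upper2[where i=n])
      then show ?thesis using True by simp
    qed (auto simp: f_def)
  qed
  have each: "integral\<^sup>N lborel (f i) \<le> ennreal B" for i
  proof -
    have hi: "(phi has_integral integral {1..1 + real i} phi) {1..1 + real i}"
      using integrable_on_subinterval[OF phi_int[of "1 + real i"], of 1 "1 + real i"] by auto
    have "integral\<^sup>N lborel (f i) = ennreal (integral {1..1 + real i} phi)"
      unfolding f_def using nn_integral_has_integral_lebesgue'[OF _ hi] phi_nonneg by simp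
    also have "integral {1..1 + real i} phi = J (1 + real i) - J 1" using J_diff[of 1 "1 + real i"] by simp
    also have "\<dots> \<le> B"
      using bnd[of "1 + real i"] J_strict[of 0 1] by simp
    finally show ?thesis by (simp add: ennreal_leI)
  qed
  have "(\<integral>\<^sup>+ t. ennreal (phi t) * indicator {1..} t \<partial>lborel) = (SUP i. integral\<^sup>N lborel (f i))"
    using nn_integral_monotone_convergence_SUP[OF inc fm] sup by simp
  also have "\<dots> \<le> ennreal B" by (rule SUP_least) (rule each)
  finally show False using G2' by (simp add: top_unique)
qed

definition "HH t = J t powr (1 / aa)"

lemma Hfun_eq: "0 \<le> t \<Longrightarrow> Hfun g s N t = HH t"
proof -
  assume t: "0 \<le> t"
  have si: "set_integrable lborel {0..t} (\<lambda>\<tau>. (\<tau> / prim g \<tau>) powr (s / (N - s)))"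
    using phi_si[of t] by (rule set_integrable_cong[THEN iffD1, rotated -1]) (auto simp: phi_eq)
  have "(LBINT \<tau>=0..t. (\<tau> / prim g \<tau>) powr (s / (N - s))) = integral {0..t} (\<lambda>\<tau>. (\<tau> / prim g \<tau>) powr (s / (N - s)))"
    using interval_integral_eq_integral[OF t si] by (simp add: zero_ereal_def)
  also have "\<dots> = J t" unfolding J_def by (rule integral_cong) (auto simp: phi_eq)
  finally show ?thesis using sN s0 by (simp add: Hfun_def HH_def aa_def)
qed

lemma J_nonneg: "0 \<le> t \<Longrightarrow> 0 \<le> J t"
  using J_strict[of 0 t] by (cases "t = 0") auto

lemma HH_inj: "inj_on HH {0..}"
proof (rule inj_onI)
  fix x y :: real assume xy: "x \<in> {0..}" "y \<in> {0..}" "HH x = HH y"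
  have mono: "HH u < HH v" if "0 \<le> u" "u < v" for u v
    unfolding HH_def using J_strict[OF that] J_nonneg[of u] that aa_pos
    by (intro powr_less_mono2) auto
  show "x = y"
  proof (rule ccontr)
    assume "x \<noteq> y"
    then have "x < y \<or> y < x" by auto
    then show False using mono xy by (metis atLeast_iff less_irrefl)
  qed
qed

lemma HH_surj: "0 \<le> t \<Longrightarrow> \<exists>x\<ge>0. HH x = t"
proof -
  assume t: "0 \<le> t"
  obtain T where T: "0 \<le> T" "t powr aa < J T" using J_unbounded by blast
  have "\<exists>x\<in>{0..T}. J x = t powr aa"
    using IVT'[of J 0 "t powr aa" T] J_cont[of T] T by auto
  then obtain x where x: "x \<in> {0..T}" "J x = t powr aa" by blast
  have "HH x = (t powr aa) powr (1 / aa)" by (simp add: HH_def x)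
  also have "\<dots> = t" using aa_pos t by (simp add: powr_powr)
  finally show ?thesis using x by auto
qed

lemma HH0: "HH 0 = 0" by (simp add: HH_def)

end



lemma G_comp_meas:
  assumes "gctx g" "f \<in> borel_measurable M" "\<And>x. 0 \<le> f x"
  shows "(\<lambda>x. prim g (f x)) \<in> borel_measurable M"
proof -
  have "(\<lambda>x. prim g (max 0 (f x))) \<in> borel_measurable M"
    using measurable_compose[OF assms(2) gctx.G_meas[OF assms(1)]] by simp
  then show ?thesis using assms(3) by (simp add: max_absorb2)
qed

lemma bochner_le_nn:
  fixes f :: "'a \<Rightarrow> real"
  assumes "\<And>x. 0 \<le> f x"
  shows "integral\<^sup>L M f \<le> enn2real (\<integral>\<^sup>+ x. ennreal (f x) \<partial>M)"
proof (cases "integrable M f")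
  case True
  then show ?thesis using integral_eq_nn_integral[of f M] assms by auto
next
  case False then show ?thesis by (simp add: not_integrable_integral_eq)
qed

locale gctx2 = gctx1 + fixes s :: real assumes pp_pos: "0 < pp" and s_pos: "0 < s"
begin

definition "K2 = (SOME K. K > 0 \<and> (\<forall>x\<ge>0. prim g (2 * x) \<le> K * prim g x))"

lemma K2: "K2 > 0" "\<And>x. 0 \<le> x \<Longrightarrow> prim g (2 * x) \<le> K2 * prim g x"
proof -
  have "\<exists>K. K > 0 \<and> (\<forall>x\<ge>0. prim g (2 * x) \<le> K * prim g x)"
    using G_doubling[of 2] pp_pos by auto
  from someI_ex[OF this] show "K2 > 0" "\<And>x. 0 \<le> x \<Longrightarrow> prim g (2 * x) \<le> K2 * prim g x"
    unfolding K2_def by auto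
qed

lemma G_sum:
  assumes "0 \<le> a" "0 \<le> b" "0 \<le> c" "a \<le> b + c"
  shows "prim g a \<le> K2 * (prim g b + prim g c)"
proof -
  define m where "m = max b c"
  have "a \<le> 2 * m" using assms by (simp add: m_def)
  then have "prim g a \<le> prim g (2 * m)" using assms by (intro G_mono) auto
  also have "\<dots> \<le> K2 * prim g m" using K2(2)[of m] assms by (simp add: m_def)
  also have "prim g m \<le> prim g b + prim g c"
    using G_nonneg[of b] G_nonneg[of c] assms by (simp add: m_def max_def)
  then have "K2 * prim g m \<le> K2 * (prim g b + prim g c)" using K2(1) by simp
  finally show ?thesis .
qed

abbreviation "GG \<equiv> prim g"

definition Ds :: "('a::euclidean_space \<Rightarrow> real) \<Rightarrow> 'a \<times> 'a \<Rightarrow> real" where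
  "Ds u z = \<bar>u (fst z) - u (snd z)\<bar> / dist (fst z) (snd z) powr s"

lemma Ds_nonneg: "0 \<le> Ds u z" by (simp add: Ds_def)

lemma Phi_sG_Ds: "Phi_sG GG s u = (\<integral>\<^sup>+ z. ennreal (GG (Ds u z) / dist (fst z) (snd z) powr real DIM('a)) \<partial>(lborel \<Otimes>\<^sub>M lborel))"
  for u :: "'a::euclidean_space \<Rightarrow> real"
  by (simp add: Phi_sG_def Ds_def)

lemma Ds_meas[measurable]:
  fixes u :: "'a::euclidean_space \<Rightarrow> real"
  assumes [measurable]: "u \<in> borel_measurable lborel"
  shows "Ds u \<in> borel_measurable (lborel \<Otimes>\<^sub>M lborel)"
  unfolding Ds_def by measurable

lemma int_s_meas:
  fixes u :: "'a::euclidean_space \<Rightarrow> real"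
  assumes [measurable]: "u \<in> borel_measurable lborel"
  shows "(\<lambda>z. ennreal (GG (Ds u z) / dist (fst z) (snd z) powr real DIM('a))) \<in> borel_measurable (lborel \<Otimes>\<^sub>M lborel)"
proof -
  have [measurable]: "(\<lambda>z. GG (Ds u z)) \<in> borel_measurable (lborel \<Otimes>\<^sub>M lborel)"
    by (rule G_comp_meas[OF gctx_axioms]) (auto simp: Ds_nonneg)
  show ?thesis by measurable
qed

lemma int_g_meas:
  fixes u :: "'a::euclidean_space \<Rightarrow> real"
  assumes [measurable]: "u \<in> borel_measurable lborel"
  shows "(\<lambda>x. ennreal (GG \<bar>u x\<bar>)) \<in> borel_measurable lborel"
proof -
  have [measurable]: "(\<lambda>x. GG \<bar>u x\<bar>) \<in> borel_measurable lborel"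
    by (rule G_comp_meas[OF gctx_axioms]) auto
  show ?thesis by measurable
qed

lemma rho_mono:
  fixes u v :: "'a::euclidean_space \<Rightarrow> real"
  assumes "\<And>x. \<bar>u x\<bar> \<le> \<bar>v x\<bar>" "\<And>x y. \<bar>u x - u y\<bar> \<le> \<bar>v x - v y\<bar>"
  shows "rho GG s u \<le> rho GG s v"
proof -
  have 1: "Phi_G GG u \<le> Phi_G GG v" unfolding Phi_G_def
    by (intro nn_integral_mono ennreal_leI G_mono) (auto simp: assms)
  have "Ds u z \<le> Ds v z" for z
    unfolding Ds_def by (intro divide_right_mono) (auto simp: assms)
  then have 2: "Phi_sG GG s u \<le> Phi_sG GG s v" unfolding Phi_sG_Ds
    by (intro nn_integral_mono ennreal_leI divide_right_mono G_mono) (auto simp: Ds_nonneg)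
  show ?thesis using 1 2 unfolding rho_def by (rule add_mono)
qed

lemma nn_comb:
  fixes F f h :: "'b \<Rightarrow> real"
  assumes [measurable]: "(\<lambda>x. ennreal (f x)) \<in> borel_measurable M" "(\<lambda>x. ennreal (h x)) \<in> borel_measurable M"
    and "\<And>x. F x \<le> K * (f x + h x)" "0 \<le> K" "\<And>x. 0 \<le> f x" "\<And>x. 0 \<le> h x"
  shows "(\<integral>\<^sup>+ x. ennreal (F x) \<partial>M) \<le> ennreal K * ((\<integral>\<^sup>+ x. ennreal (f x) \<partial>M) + (\<integral>\<^sup>+ x. ennreal (h x) \<partial>M))"
proof -
  have "(\<integral>\<^sup>+ x. ennreal (F x) \<partial>M) \<le> (\<integral>\<^sup>+ x. ennreal K * (ennreal (f x) + ennreal (h x)) \<partial>M)"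
    using assms by (intro nn_integral_mono) (metis ennreal_leI ennreal_mult ennreal_plus add_nonneg_nonneg)
  also have "\<dots> = ennreal K * (\<integral>\<^sup>+ x. ennreal (f x) + ennreal (h x) \<partial>M)"
    by (rule nn_integral_cmult) measurable
  also have "(\<integral>\<^sup>+ x. ennreal (f x) + ennreal (h x) \<partial>M) = (\<integral>\<^sup>+ x. ennreal (f x) \<partial>M) + (\<integral>\<^sup>+ x. ennreal (h x) \<partial>M)"
    by (rule nn_integral_add) measurable
  finally show ?thesis .
qed

lemma rho_tri:
  fixes u v w :: "'a::euclidean_space \<Rightarrow> real"
  assumes [measurable]: "v \<in> borel_measurable lborel" "w \<in> borel_measurable lborel"
    and p1: "\<And>x. \<bar>u x\<bar> \<le> \<bar>v x\<bar> + \<bar>w x\<bar>"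
    and p2: "\<And>x y. \<bar>u x - u y\<bar> \<le> \<bar>v x - v y\<bar> + \<bar>w x - w y\<bar>"
  shows "rho GG s u \<le> ennreal K2 * (rho GG s v + rho GG s w)"
proof -
  have 1: "Phi_G GG u \<le> ennreal K2 * (Phi_G GG v + Phi_G GG w)" unfolding Phi_G_def
    by (rule nn_comb[OF int_g_meas int_g_meas]) (auto intro!: G_sum G_nonneg p1 less_imp_le[OF K2(1)])
  have ds: "Ds u z \<le> Ds v z + Ds w z" for z
    unfolding Ds_def add_divide_distrib[symmetric] by (intro divide_right_mono) (auto simp: p2)
  have 2: "Phi_sG GG s u \<le> ennreal K2 * (Phi_sG GG s v + Phi_sG GG s w)" unfolding Phi_sG_Ds
  proof (rule nn_comb[OF int_s_meas int_s_meas])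
    fix z :: "'a \<times> 'a"
    have "GG (Ds u z) \<le> K2 * (GG (Ds v z) + GG (Ds w z))" by (rule G_sum) (auto simp: Ds_nonneg ds)
    then show "GG (Ds u z) / dist (fst z) (snd z) powr real DIM('a) \<le>
      K2 * (GG (Ds v z) / dist (fst z) (snd z) powr real DIM('a) + GG (Ds w z) / dist (fst z) (snd z) powr real DIM('a))"
      by (simp add: add_divide_distrib[symmetric] divide_right_mono)
  qed (auto intro!: G_nonneg divide_nonneg_nonneg Ds_nonneg less_imp_le[OF K2(1)])
  have "rho GG s u \<le> ennreal K2 * (Phi_G GG v + Phi_G GG w) + ennreal K2 * (Phi_sG GG s v + Phi_sG GG s w)"
    unfolding rho_def using 1 2 by (rule add_mono)
  also have "\<dots> = ennreal K2 * (rho GG s v + rho GG s w)"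
    unfolding rho_def by (simp add: distrib_left ac_simps)
  finally show ?thesis .
qed

lemma rho_scale_down:
  fixes u :: "'a::euclidean_space \<Rightarrow> real"
  assumes [measurable]: "u \<in> borel_measurable lborel" and c: "0 \<le> c" "c \<le> 1"
  shows "rho GG s (\<lambda>x. c * u x) \<le> ennreal c * rho GG s u"
proof -
  have 1: "Phi_G GG (\<lambda>x. c * u x) \<le> ennreal c * Phi_G GG u" unfolding Phi_G_def
  proof -
    have "(\<integral>\<^sup>+ x. ennreal (GG \<bar>c * u x\<bar>) \<partial>lborel) \<le> (\<integral>\<^sup>+ x. ennreal c * ennreal (GG \<bar>u x\<bar>) \<partial>lborel)"
    proof (intro nn_integral_mono)
      fix x
      have "GG (c * \<bar>u x\<bar>) \<le> c * GG \<bar>u x\<bar>" by (rule G_scale_down) (use c in auto)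
      then show "ennreal (GG \<bar>c * u x\<bar>) \<le> ennreal c * ennreal (GG \<bar>u x\<bar>)"
      proof -
        have "ennreal c * ennreal (GG \<bar>u x\<bar>) = ennreal (c * GG \<bar>u x\<bar>)"
          using c G_nonneg[of "\<bar>u x\<bar>"] by (simp add: ennreal_mult)
        moreover have "\<bar>c * u x\<bar> = c * \<bar>u x\<bar>" using c by (simp add: abs_mult)
        ultimately show ?thesis using \<open>GG (c * \<bar>u x\<bar>) \<le> c * GG \<bar>u x\<bar>\<close> by (simp add: ennreal_leI)
      qed
    qed
    also have "\<dots> = ennreal c * (\<integral>\<^sup>+ x. ennreal (GG \<bar>u x\<bar>) \<partial>lborel)"
      by (rule nn_integral_cmult) (rule int_g_meas, measurable)
    finally show "(\<integral>\<^sup>+ x. ennreal (GG \<bar>c * u x\<bar>) \<partial>lborel) \<le> ennreal c * (\<integral>\<^sup>+ x. ennreal (GG \<bar>u x\<bar>) \<partial>lborel)" .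
  qed
  have 2: "Phi_sG GG s (\<lambda>x. c * u x) \<le> ennreal c * Phi_sG GG s u"
  proof -
    have "(\<integral>\<^sup>+ z. ennreal (GG (Ds (\<lambda>x. c * u x) z) / dist (fst z) (snd z) powr real DIM('a)) \<partial>(lborel \<Otimes>\<^sub>M lborel))
      \<le> (\<integral>\<^sup>+ z. ennreal c * ennreal (GG (Ds u z) / dist (fst z) (snd z) powr real DIM('a)) \<partial>(lborel \<Otimes>\<^sub>M lborel))"
    proof (intro nn_integral_mono)
      fix z :: "'a \<times> 'a"
      have e: "Ds (\<lambda>x. c * u x) z = c * Ds u z"
        unfolding Ds_def using c by (simp add: abs_mult right_diff_distrib[symmetric])
      have "GG (c * Ds u z) \<le> c * GG (Ds u z)" by (rule G_scale_down) (use c Ds_nonneg[of u z] in auto)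
      then have "GG (c * Ds u z) / dist (fst z) (snd z) powr real DIM('a) \<le> c * (GG (Ds u z) / dist (fst z) (snd z) powr real DIM('a))"
        by (simp add: divide_right_mono)
      then show "ennreal (GG (Ds (\<lambda>x. c * u x) z) / dist (fst z) (snd z) powr real DIM('a))
          \<le> ennreal c * ennreal (GG (Ds u z) / dist (fst z) (snd z) powr real DIM('a))"
        unfolding e using c by (simp add: ennreal_mult[symmetric] ennreal_leI G_nonneg Ds_nonneg)
    qed
    also have "\<dots> = ennreal c * (\<integral>\<^sup>+ z. ennreal (GG (Ds u z) / dist (fst z) (snd z) powr real DIM('a)) \<partial>(lborel \<Otimes>\<^sub>M lborel))"
      by (rule nn_integral_cmult) (rule int_s_meas, measurable)
    finally show ?thesis by (simp only: Phi_sG_Ds)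
  qed
  show ?thesis unfolding rho_def using add_mono[OF 1 2] by (simp add: distrib_left)
qed

end


context gctx2
begin

definition "NS u = {l. l > 0 \<and> rho GG s (\<lambda>x. u x / l) \<le> 1}"

lemma sG_norm_NS: "sG_norm GG s u = Inf (NS u)" by (simp add: sG_norm_def NS_def)

lemma sG_norm_le:
  assumes "0 < l" "rho GG s (\<lambda>x. u x / l) \<le> 1"
  shows "sG_norm GG s u \<le> l" "0 \<le> sG_norm GG s u"
proof -
  have l: "l \<in> NS u" using assms by (simp add: NS_def)
  have bb: "bdd_below (NS u)" unfolding NS_def by (rule bdd_belowI[of _ 0]) auto
  show "sG_norm GG s u \<le> l" unfolding sG_norm_NS by (rule cInf_lower[OF l bb])
  show "0 \<le> sG_norm GG s u" unfolding sG_norm_NS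
    by (rule cInf_greatest) (use l in \<open>auto simp: NS_def\<close>)
qed

lemma NS_nonempty:
  fixes u :: "'a::euclidean_space \<Rightarrow> real"
  assumes [measurable]: "u \<in> borel_measurable lborel" and fin: "rho GG s u < \<infinity>"
  shows "NS u \<noteq> {}"
proof -
  define r where "r = enn2real (rho GG s u)"
  have r: "0 \<le> r" "rho GG s u = ennreal r" using fin by (auto simp: r_def less_top)
  define l where "l = 1 + r"
  have l: "0 < l" "1 / l \<le> 1" using r by (auto simp: l_def)
  have eq: "(\<lambda>x. u x / l) = (\<lambda>x. (1 / l) * u x)" by auto
  have "rho GG s (\<lambda>x. u x / l) \<le> ennreal (1 / l) * rho GG s u"
    unfolding eq by (rule rho_scale_down) (use l in auto)
  also have "\<dots> = ennreal (r / l)" using r l by (simp add: ennreal_mult[symmetric])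
  also have "\<dots> \<le> 1" using r l by (simp add: l_def)
  finally have "l \<in> NS u" using l by (simp add: NS_def)
  then show ?thesis by blast
qed

lemma small_norm_rho:
  fixes u :: "'a::euclidean_space \<Rightarrow> real"
  assumes [measurable]: "u \<in> borel_measurable lborel" and fin: "rho GG s u < \<infinity>"
    and sm: "sG_norm GG s u < 1"
  shows "rho GG s u \<le> 1"
proof -
  obtain l where l: "l \<in> NS u" "l < 1"
    using cInf_lessD[OF NS_nonempty[OF assms(1,2)] sm[unfolded sG_norm_NS]] by blast
  then have l0: "0 < l" "rho GG s (\<lambda>x. u x / l) \<le> 1" by (auto simp: NS_def)
  have "rho GG s u \<le> rho GG s (\<lambda>x. u x / l)"
  proof (rule rho_mono)
    have "\<bar>a\<bar> \<le> \<bar>a / l\<bar>" for a using l l0 by (simp add: abs_divide le_divide_eq mult_left_le)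
    then show "\<And>x. \<bar>u x\<bar> \<le> \<bar>u x / l\<bar>" "\<And>x y. \<bar>u x - u y\<bar> \<le> \<bar>u x / l - u y / l\<bar>"
      by (auto simp: diff_divide_distrib[symmetric])
  qed
  then show ?thesis using l0 by simp
qed

lemma I_bound:
  fixes u :: "'a::euclidean_space \<Rightarrow> real"
  assumes GNs: "\<And>t. 0 \<le> t \<Longrightarrow> 0 \<le> GNs g s (real DIM('a)) t"
    and fin: "rho GG s u < \<infinity>"
  shows "I_fun g f s lam u \<le> enn2real (rho GG s u) - lam * (\<integral>x. prim f (u x) \<partial>lborel)"
proof -
  have A: "(\<integral>z. prim g (\<bar>u (fst z) - u (snd z)\<bar> / dist (fst z) (snd z) powr s)
        / dist (fst z) (snd z) powr real DIM('a) \<partial>(lborel \<Otimes>\<^sub>M lborel)) \<le> enn2real (Phi_sG GG s u)"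
    unfolding Phi_sG_def by (rule bochner_le_nn) (auto intro!: divide_nonneg_nonneg G_nonneg)
  have B: "(\<integral>x. prim g \<bar>u x\<bar> \<partial>lborel) \<le> enn2real (Phi_G GG u)"
    unfolding Phi_G_def by (rule bochner_le_nn) (auto intro!: G_nonneg)
  have C: "0 \<le> (\<integral>x. GNs g s (real DIM('a)) \<bar>u x\<bar> \<partial>lborel)"
    by (rule Bochner_Integration.integral_nonneg) (auto intro!: GNs)
  have fin2: "Phi_G GG u < top" "Phi_sG GG s u < top" using fin unfolding rho_def
    by (auto simp: top_unique)
  have "enn2real (rho GG s u) = enn2real (Phi_G GG u) + enn2real (Phi_sG GG s u)"
    unfolding rho_def using fin2 by (rule enn2real_plus)
  then show ?thesis using A B C unfolding I_fun_def by linarith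
qed

lemma I_zero:
  assumes "GNs g s (real DIM('a)) 0 = 0"
  shows "I_fun g f s lam (\<lambda>x::'a::euclidean_space. 0) = 0"
  using assms by (simp add: I_fun_def prim_def zero_ereal_def)

end


context gctx2
begin

lemma G_scale_any:
  assumes "0 < l"
  shows "\<exists>K>0. \<forall>x\<ge>0. GG (x / l) \<le> K * GG x"
proof -
  obtain K where K: "K > 0" "\<And>x. 0 \<le> x \<Longrightarrow> GG (max 1 (1/l) * x) \<le> K * GG x"
    using G_doubling[of "max 1 (1/l)"] pp_pos by auto
  show ?thesis
  proof (intro exI[of _ K] conjI allI impI)
    fix x :: real assume x: "0 \<le> x"
    have "GG (x / l) \<le> GG (max 1 (1/l) * x)"
    proof (rule G_mono)
      show "0 \<le> x / l" using x assms by simp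
      have "(1/l) * x \<le> max 1 (1/l) * x" by (rule mult_right_mono[OF max.cobounded2 x])
      then show "x / l \<le> max 1 (1/l) * x" by simp
    qed
    also have "\<dots> \<le> K * GG x" using K x by auto
    finally show "GG (x / l) \<le> K * GG x" .
  qed (rule K)
qed

lemma rho_dct:
  fixes e :: "'a::euclidean_space \<Rightarrow> real" and d :: "nat \<Rightarrow> 'a \<Rightarrow> real"
  assumes [measurable]: "e \<in> borel_measurable lborel" "\<And>n. d n \<in> borel_measurable lborel"
    and fin: "rho GG s e < \<infinity>"
    and b1: "\<And>n x. \<bar>d n x\<bar> \<le> \<bar>e x\<bar>"
    and b2: "\<And>n x y. \<bar>d n x - d n y\<bar> \<le> \<bar>e x - e y\<bar>"
    and lim: "\<And>x. (\<lambda>n. d n x) \<longlonglongrightarrow> 0"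
    and l: "0 < l"
  shows "(\<lambda>n. rho GG s (\<lambda>x. d n x / l)) \<longlonglongrightarrow> 0"
proof -
  obtain K where K: "K > 0" "\<And>x. 0 \<le> x \<Longrightarrow> GG (x / l) \<le> K * GG x"
    using G_scale_any[OF l] by auto
  have fin2: "Phi_G GG e < \<infinity>" "Phi_sG GG s e < \<infinity>" using fin unfolding rho_def
    by (auto simp: top_unique)
  have 1: "(\<lambda>n. Phi_G GG (\<lambda>x. d n x / l)) \<longlonglongrightarrow> 0"
  proof -
    have "(\<lambda>n. \<integral>\<^sup>+ x. ennreal (GG \<bar>d n x / l\<bar>) \<partial>lborel) \<longlonglongrightarrow> (\<integral>\<^sup>+ x. 0 \<partial>(lborel::'a measure))"
    proof (rule nn_integral_dominated_convergence[where w="\<lambda>x. ennreal K * ennreal (GG \<bar>e x\<bar>)"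
        and u="\<lambda>n x. ennreal (GG \<bar>d n x / l\<bar>)" and u'="\<lambda>x. 0" and M=lborel])
      show "\<And>i. (\<lambda>x. ennreal (GG \<bar>d i x / l\<bar>)) \<in> borel_measurable lborel"
        by (rule int_g_meas) measurable
      show "(\<lambda>x. 0::ennreal) \<in> borel_measurable lborel" by simp
      show "(\<lambda>x. ennreal K * ennreal (GG \<bar>e x\<bar>)) \<in> borel_measurable lborel"
        using int_g_meas[of e] by measurable
      show "AE x in lborel. ennreal (GG \<bar>d j x / l\<bar>) \<le> ennreal K * ennreal (GG \<bar>e x\<bar>)" for j
      proof (rule AE_I2)
        fix x
        have "GG \<bar>d j x / l\<bar> = GG (\<bar>d j x\<bar> / l)" using l by (simp add: abs_divide)
        also have "\<dots> \<le> GG (\<bar>e x\<bar> / l)" using l b1[of j x] by (intro G_mono divide_right_mono) auto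
        also have "\<dots> \<le> K * GG \<bar>e x\<bar>" using K by simp
        finally show "ennreal (GG \<bar>d j x / l\<bar>) \<le> ennreal K * ennreal (GG \<bar>e x\<bar>)"
          using K G_nonneg[of "\<bar>e x\<bar>"] by (simp add: ennreal_mult[symmetric] ennreal_leI)
      qed
      have "(\<integral>\<^sup>+ x. ennreal K * ennreal (GG \<bar>e x\<bar>) \<partial>lborel) = ennreal K * Phi_G GG e"
        unfolding Phi_G_def by (rule nn_integral_cmult) (rule int_g_meas, measurable)
      then show "(\<integral>\<^sup>+ x. ennreal K * ennreal (GG \<bar>e x\<bar>) \<partial>lborel) < \<infinity>"
        using fin2 by (simp add: ennreal_mult_less_top)
      show "AE x in lborel. (\<lambda>i. ennreal (GG \<bar>d i x / l\<bar>)) \<longlonglongrightarrow> 0"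
      proof (rule AE_I2)
        fix x
        have "(\<lambda>i. \<bar>d i x / l\<bar>) \<longlonglongrightarrow> 0"
          using tendsto_rabs[OF tendsto_divide[OF lim[of x] tendsto_const[of l]]] l by simp
        then have "(\<lambda>i. GG \<bar>d i x / l\<bar>) \<longlonglongrightarrow> 0" by (rule G_tendsto0) simp
        then show "(\<lambda>i. ennreal (GG \<bar>d i x / l\<bar>)) \<longlonglongrightarrow> 0"
          using tendsto_ennrealI by fastforce
      qed
    qed
    then show ?thesis unfolding Phi_G_def by simp
  qed
  have 2: "(\<lambda>n. Phi_sG GG s (\<lambda>x. d n x / l)) \<longlonglongrightarrow> 0"
  proof -
    let ?D = "\<lambda>z::'a\<times>'a. dist (fst z) (snd z) powr real DIM('a)"
    have "(\<lambda>n. \<integral>\<^sup>+ z. ennreal (GG (Ds (\<lambda>x. d n x / l) z) / ?D z) \<partial>(lborel \<Otimes>\<^sub>M lborel))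
        \<longlonglongrightarrow> (\<integral>\<^sup>+ z. 0 \<partial>(lborel \<Otimes>\<^sub>M lborel :: ('a \<times> 'a) measure))"
    proof (rule nn_integral_dominated_convergence[where w="\<lambda>z. ennreal K * ennreal (GG (Ds e z) / ?D z)"
        and u="\<lambda>n z. ennreal (GG (Ds (\<lambda>x. d n x / l) z) / ?D z)" and u'="\<lambda>x. 0" and M="lborel \<Otimes>\<^sub>M lborel"])
      show "\<And>i. (\<lambda>z. ennreal (GG (Ds (\<lambda>x. d i x / l) z) / ?D z)) \<in> borel_measurable (lborel \<Otimes>\<^sub>M lborel)"
        by (rule int_s_meas) measurable
      show "(\<lambda>x. 0::ennreal) \<in> borel_measurable (lborel \<Otimes>\<^sub>M lborel)" by simp
      show "(\<lambda>z. ennreal K * ennreal (GG (Ds e z) / ?D z)) \<in> borel_measurable (lborel \<Otimes>\<^sub>M lborel)"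
        using int_s_meas[of e] by measurable
      show "AE z in lborel \<Otimes>\<^sub>M lborel. ennreal (GG (Ds (\<lambda>x. d j x / l) z) / ?D z) \<le> ennreal K * ennreal (GG (Ds e z) / ?D z)" for j
      proof (rule AE_I2)
        fix z :: "'a \<times> 'a"
        have e1: "Ds (\<lambda>x. d j x / l) z = Ds (d j) z / l"
          unfolding Ds_def using l by (simp add: diff_divide_distrib[symmetric] abs_divide)
        have "Ds (d j) z \<le> Ds e z" unfolding Ds_def by (intro divide_right_mono) (auto simp: b2)
        then have "GG (Ds (d j) z / l) \<le> GG (Ds e z / l)"
          using l Ds_nonneg[of "d j" z] by (intro G_mono divide_right_mono) auto
        also have "\<dots> \<le> K * GG (Ds e z)" using K Ds_nonneg[of e z] by simp
        finally have "GG (Ds (d j) z / l) / ?D z \<le> K * GG (Ds e z) / ?D z"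
          by (simp add: divide_right_mono)
        then show "ennreal (GG (Ds (\<lambda>x. d j x / l) z) / ?D z) \<le> ennreal K * ennreal (GG (Ds e z) / ?D z)"
          unfolding e1 using K G_nonneg[of "Ds e z"] Ds_nonneg[of e z]
          by (simp add: ennreal_mult[symmetric] ennreal_leI)
      qed
      have "(\<integral>\<^sup>+ z. ennreal K * ennreal (GG (Ds e z) / ?D z) \<partial>(lborel \<Otimes>\<^sub>M lborel)) = ennreal K * Phi_sG GG s e"
        unfolding Phi_sG_Ds by (rule nn_integral_cmult) (rule int_s_meas, measurable)
      then show "(\<integral>\<^sup>+ z. ennreal K * ennreal (GG (Ds e z) / ?D z) \<partial>(lborel \<Otimes>\<^sub>M lborel)) < \<infinity>"
        using fin2 by (simp add: ennreal_mult_less_top)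
      show "AE z in lborel \<Otimes>\<^sub>M lborel. (\<lambda>i. ennreal (GG (Ds (\<lambda>x. d i x / l) z) / ?D z)) \<longlonglongrightarrow> 0"
      proof (rule AE_I2)
        fix z :: "'a \<times> 'a"
        have "(\<lambda>i. Ds (\<lambda>x. d i x / l) z) \<longlonglongrightarrow> 0"
          unfolding Ds_def
          using tendsto_divide[OF tendsto_rabs[OF tendsto_diff[OF tendsto_divide[OF lim[of "fst z"] tendsto_const[of l]]
                tendsto_divide[OF lim[of "snd z"] tendsto_const[of l]]]] tendsto_const[of "dist (fst z) (snd z) powr s"]]
          using l by (cases "dist (fst z) (snd z) powr s = 0") auto
        then have "(\<lambda>i. GG (Ds (\<lambda>x. d i x / l) z)) \<longlonglongrightarrow> 0" by (rule G_tendsto0) (simp add: Ds_nonneg)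
        then have "(\<lambda>i. GG (Ds (\<lambda>x. d i x / l) z) / ?D z) \<longlonglongrightarrow> 0"
          using tendsto_divide[OF _ tendsto_const[of "?D z"]]
          by (cases "?D z = 0") auto
        then show "(\<lambda>i. ennreal (GG (Ds (\<lambda>x. d i x / l) z) / ?D z)) \<longlonglongrightarrow> 0"
          using tendsto_ennrealI by fastforce
      qed
    qed
    then show ?thesis unfolding Phi_sG_Ds by simp
  qed
  show ?thesis unfolding rho_def using tendsto_add[OF 1 2] by simp
qed

end


lemma compact_local_bound:
  fixes h :: "real \<Rightarrow> ennreal"
  assumes loc: "\<And>t0. t0 \<in> {0..1} \<Longrightarrow> \<exists>b<\<infinity>. eventually (\<lambda>t. h t \<le> b) (at t0 within {0..1})"
    and pt: "\<And>t0. t0 \<in> {0..1} \<Longrightarrow> h t0 < \<infinity>"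
  shows "\<exists>B<\<infinity>. \<forall>t\<in>{0..1}. h t \<le> B"
proof -
  have "\<forall>t0\<in>{0..1}. \<exists>p. open (fst p) \<and> t0 \<in> fst p \<and> snd p < \<infinity> \<and>
          (\<forall>t\<in>fst p. t \<in> {0..1} \<longrightarrow> h t \<le> snd p)"
  proof
    fix t0 :: real assume t0: "t0 \<in> {0..1}"
    obtain b where b: "b < \<infinity>" "eventually (\<lambda>t. h t \<le> b) (at t0 within {0..1})" using loc[OF t0] by blast
    obtain S where S: "open S" "t0 \<in> S" "\<And>t. t \<in> S \<Longrightarrow> t \<in> {0..1} \<Longrightarrow> t \<noteq> t0 \<Longrightarrow> h t \<le> b"
      using b(2) unfolding eventually_at_topological by blast
    show "\<exists>p. open (fst p) \<and> t0 \<in> fst p \<and> snd p < \<infinity> \<and> (\<forall>t\<in>fst p. t \<in> {0..1} \<longrightarrow> h t \<le> snd p)"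
    proof (intro exI[of _ "(S, b + h t0)"] conjI ballI impI)
      show "snd (S, b + h t0) < \<infinity>" using b pt[OF t0] by (simp add: ennreal_add_less_top)
      fix t assume t: "t \<in> fst (S, b + h t0)" "t \<in> {0..1}"
      show "h t \<le> snd (S, b + h t0)"
      proof (cases "t = t0")
        case True then show ?thesis by (simp add: add_increasing)
      next
        case False then have "h t \<le> b" using S t by auto
        then show ?thesis by (simp add: add_increasing2)
      qed
    qed (use S in auto)
  qed
  then obtain P where P: "\<And>t0. t0 \<in> {0..1} \<Longrightarrow> open (fst (P t0)) \<and> t0 \<in> fst (P t0) \<and> snd (P t0) < \<infinity> \<and>
          (\<forall>t\<in>fst (P t0). t \<in> {0..1} \<longrightarrow> h t \<le> snd (P t0))"
    by metis
  obtain C where C: "C \<subseteq> {0..1}" "finite C" "{0..1::real} \<subseteq> (\<Union>c\<in>C. fst (P c))"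
    by (rule compactE_image[of "{0..1::real}" "{0..1}" "\<lambda>c. fst (P c)"]) (use P in auto)
  show ?thesis
  proof (intro exI[of _ "\<Sum>c\<in>C. snd (P c)"] conjI ballI)
    show "(\<Sum>c\<in>C. snd (P c)) < \<infinity>" using P C by (auto simp: less_top)
    fix t :: real assume t: "t \<in> {0..1}"
    then obtain c where c: "c \<in> C" "t \<in> fst (P c)" using C by auto
    then have "h t \<le> snd (P c)" using P[of c] C t by auto
    also have "\<dots> \<le> (\<Sum>c\<in>C. snd (P c))" by (rule member_le_sum) (use c C in auto)
    finally show "h t \<le> (\<Sum>c\<in>C. snd (P c))" .
  qed
qed

lemma clamp_lip:
  fixes a b z w :: real
  shows "\<bar>(min z a - min z b) - (min w a - min w b)\<bar> \<le> \<bar>z - w\<bar>"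
  by (auto simp: min_def split: if_splits)

lemma clamp_lip2:
  fixes a z w :: real
  shows "\<bar>(min z a - z) - (min w a - w)\<bar> \<le> \<bar>z - w\<bar>"
  by (auto simp: min_def split: if_splits)

context hctx
begin

lemma Hfun_inj: "inj_on (Hfun g s N) {0..}"
  using HH_inj by (rule inj_on_cong[THEN iffD2, rotated]) (simp add: Hfun_eq)

lemma GNs_nonneg: "0 \<le> t \<Longrightarrow> 0 \<le> GNs g s N t"
proof -
  assume t: "0 \<le> t"
  obtain x where x: "0 \<le> x" "HH x = t" using HH_surj[OF t] by blast
  have "t \<in> Hfun g s N ` {0..}" using x Hfun_eq[of x] by force
  then have "the_inv_into {0..} (Hfun g s N) t \<in> {0..}"
    by (rule the_inv_into_into[OF Hfun_inj]) simp
  then show ?thesis unfolding GNs_def by (intro G_nonneg) simp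
qed

lemma GNs0: "GNs g s N 0 = 0"
proof -
  have "the_inv_into {0..} (Hfun g s N) 0 = 0"
    by (rule the_inv_into_f_eq[OF Hfun_inj]) (auto simp: Hfun_eq HH0)
  then show ?thesis unfolding GNs_def by simp
qed

end

locale fctx = gctx +
  fixes f :: "real \<Rightarrow> real" and th :: real
  assumes f_cont: "continuous_on UNIV f"
    and f1: "((\<lambda>t. f t / g \<bar>t\<bar>) \<longlongrightarrow> 0) (at 0)"
    and th: "0 < th"
    and f3: "\<forall>t. t \<noteq> 0 \<longrightarrow> 0 < th * prim f t \<and> th * prim f t \<le> f t * t"
begin

lemma F_pos: "t \<noteq> 0 \<Longrightarrow> 0 < prim f t"
  using f3 th by (meson zero_less_mult_pos)

lemma F0[simp]: "prim f 0 = 0" by (simp add: prim_def zero_ereal_def)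

lemma F_nonneg: "0 \<le> prim f t"
  using F_pos[of t] by (cases "t = 0") auto

lemma f_pos: "0 < t \<Longrightarrow> 0 < f t"
proof -
  assume t: "0 < t"
  have "0 < f t * t" using f3 t by (smt (verit))
  then show ?thesis using t by (simp add: zero_less_mult_iff)
qed

lemma f_neg: "t < 0 \<Longrightarrow> f t < 0"
proof -
  assume t: "t < 0"
  have "0 < f t * t" using f3 t by (smt (verit))
  then show ?thesis using t by (simp add: zero_less_mult_iff)
qed

lemma f0: "f 0 = 0"
proof -
  have c: "isCont f 0" using f_cont by (simp add: continuous_on_eq_continuous_at)
  have l1: "(\<lambda>n. f (1 / Suc n)) \<longlonglongrightarrow> f 0"
    using isCont_tendsto_compose[OF c LIMSEQ_inverse_real_of_nat] by (simp add: inverse_eq_divide)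
  have l2: "(\<lambda>n. f (- (1 / Suc n))) \<longlonglongrightarrow> f 0"
  proof -
    have "(\<lambda>n. - inverse (real (Suc n))) \<longlonglongrightarrow> 0"
      using tendsto_minus[OF LIMSEQ_inverse_real_of_nat] by simp
    from isCont_tendsto_compose[OF c this] show ?thesis by (simp add: inverse_eq_divide)
  qed
  have "0 \<le> f 0" by (rule LIMSEQ_le_const[OF l1]) (auto intro!: less_imp_le f_pos)
  moreover have "f 0 \<le> 0" by (rule LIMSEQ_le_const2[OF l2]) (auto intro!: less_imp_le f_neg)
  ultimately show ?thesis by simp
qed

lemma f_si: "set_integrable lborel {a..b} f"
  by (rule borel_integrable_atLeastAtMost') (use f_cont continuous_on_subset in blast)

lemma F_eq: "0 \<le> t \<Longrightarrow> prim f t = integral {0..t} f"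
  using interval_integral_eq_integral[of 0 t f] f_si[of 0 t] by (simp add: prim_def zero_ereal_def)

lemma f_int: "f integrable_on {a..b}"
  using set_borel_integral_eq_integral(1)[OF f_si] .

lemma F_mono: "0 \<le> x \<Longrightarrow> x \<le> y \<Longrightarrow> prim f x \<le> prim f y"
proof -
  assume xy: "0 \<le> x" "x \<le> y"
  have "integral {0..x} f + integral {x..y} f = integral {0..y} f"
    using Henstock_Kurzweil_Integration.integral_combine[where a=0 and c=x and b=y and f=f] f_int xy by auto
  moreover have "0 \<le> integral {x..y} f"
    by (rule integral_nonneg[OF f_int]) (use xy f0 f_pos in \<open>auto simp: le_less\<close>)
  ultimately show ?thesis using F_eq[of x] F_eq[of y] xy by simp
qed

lemma F_meas: "(\<lambda>x. prim f (max 0 x)) \<in> borel_measurable borel"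
  by (rule borel_measurable_mono) (auto simp: mono_def intro!: F_mono)

lemma F_comp_meas:
  assumes "h \<in> borel_measurable M" "\<And>x. 0 \<le> h x"
  shows "(\<lambda>x. prim f (h x)) \<in> borel_measurable M"
proof -
  have "(\<lambda>x. prim f (max 0 (h x))) \<in> borel_measurable M"
    using measurable_compose[OF assms(1) F_meas] by simp
  then show ?thesis using assms(2) by (simp add: max_absorb2)
qed

lemma F_le_G:
  assumes K: "0 < K"
  shows "\<exists>C>0. \<forall>t. 0 \<le> t \<longrightarrow> t \<le> K \<longrightarrow> prim f t \<le> C * prim g t"
proof -
  have "eventually (\<lambda>t. \<bar>f t / g \<bar>t\<bar>\<bar> < 1) (at 0)"
    using order_tendstoD(2)[OF tendsto_rabs[OF f1]] by simp
  then obtain d where d: "0 < d" "\<And>t. t \<noteq> 0 \<Longrightarrow> dist t 0 < d \<Longrightarrow> \<bar>f t / g \<bar>t\<bar>\<bar> < 1"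
    unfolding eventually_at by auto
  define d' where "d' = min (d/2) K"
  have d': "0 < d'" "d' < d" "d' \<le> K" using d K by (auto simp: d'_def)
  have fg: "f t \<le> g t" if "0 \<le> t" "t \<le> d'" for t
  proof (cases "t = 0")
    case True then show ?thesis by (simp add: f0)
  next
    case False
    then have t: "0 < t" using that by simp
    have "\<bar>f t / g t\<bar> < 1" using d(2)[of t] t d' that by simp
    then show ?thesis using g_pos[OF t] by (simp add: abs_less_iff divide_less_eq)
  qed
  have small: "prim f t \<le> prim g t" if "0 \<le> t" "t \<le> d'" for t
  proof -
    have "integral {0..t} f \<le> integral {0..t} g"
      by (rule integral_le[OF f_int g_int_on]) (use fg that in auto)
    then show ?thesis using F_eq[of t] G_eq[of t] that by simp
  qed
  define C where "C = max 1 (prim f K / prim g d')"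
  have Gd: "0 < prim g d'" using G_pos d' by simp
  show ?thesis
  proof (intro exI[of _ C] conjI allI impI)
    show "0 < C" by (simp add: C_def)
    fix t assume t: "0 \<le> t" "t \<le> K"
    show "prim f t \<le> C * prim g t"
    proof (cases "t \<le> d'")
      case True
      then have "prim f t \<le> prim g t" using small t by simp
      also have "\<dots> \<le> C * prim g t"
        using mult_right_mono[of 1 C "prim g t"] G_nonneg[of t] t by (simp add: C_def)
      finally show ?thesis .
    next
      case False
      have "prim f t \<le> prim f K" using t by (intro F_mono) auto
      also have "\<dots> = (prim f K / prim g d') * prim g d'" using Gd by simp
      also have "\<dots> \<le> C * prim g d'" using Gd by (intro mult_right_mono) (auto simp: C_def)
      also have "\<dots> \<le> C * prim g t" using False d' by (intro mult_left_mono G_mono) (auto simp: C_def)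
      finally show ?thesis .
    qed
  qed
qed

end


definition path :: "('a \<Rightarrow> real) \<Rightarrow> real \<Rightarrow> 'a \<Rightarrow> real" where
  "path e t = (if t < 1 then (\<lambda>x. min (e x) (t / (1 - t))) else e)"

lemma path0: "(\<And>x. 0 \<le> e x) \<Longrightarrow> path e 0 = (\<lambda>x. 0)"
  by (auto simp: path_def min_def fun_eq_iff intro: antisym)

lemma path1: "path e 1 = e" by (simp add: path_def)

lemma path_meas[measurable]: "e \<in> borel_measurable M \<Longrightarrow> path e t \<in> borel_measurable M"
  unfolding path_def by (cases "t < 1") auto

lemma path_diff_bounds:
  assumes e: "\<And>x. 0 \<le> e x" and t: "0 \<le> t" "0 \<le> t0"
  shows "\<bar>path e t x - path e t0 x\<bar> \<le> \<bar>e x\<bar>"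
    "\<bar>(path e t x - path e t0 x) - (path e t y - path e t0 y)\<bar> \<le> \<bar>e x - e y\<bar>"
proof -
  have k: "0 \<le> t / (1 - t)" if "t < 1" "0 \<le> t" for t :: real using that by simp
  have ex: "0 \<le> e x" "0 \<le> e y" using e by auto
  have m1: "\<bar>min z a - min z b\<bar> \<le> \<bar>z\<bar>" if "0 \<le> z" "0 \<le> a" "0 \<le> b" for z a b :: real
    using that by (auto simp: min_def)
  have m2: "\<bar>min z a - z\<bar> \<le> \<bar>z\<bar>" "\<bar>z - min z a\<bar> \<le> \<bar>z\<bar>" if "0 \<le> z" "0 \<le> a" for z a :: real
    using that by (auto simp: min_def)
  show "\<bar>path e t x - path e t0 x\<bar> \<le> \<bar>e x\<bar>"
  proof (cases "t < 1"; cases "t0 < 1")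
    assume "t < 1" "t0 < 1" then show ?thesis unfolding path_def using m1 k t ex by simp
  next
    assume "t < 1" "\<not> t0 < 1" then show ?thesis unfolding path_def using m2 k t ex by simp
  next
    assume "\<not> t < 1" "t0 < 1" then show ?thesis unfolding path_def using m2 k t ex by simp
  next
    assume "\<not> t < 1" "\<not> t0 < 1" then show ?thesis unfolding path_def by simp
  qed
  show "\<bar>(path e t x - path e t0 x) - (path e t y - path e t0 y)\<bar> \<le> \<bar>e x - e y\<bar>"
  proof (cases "t < 1"; cases "t0 < 1")
    assume "t < 1" "t0 < 1"
    then show ?thesis unfolding path_def using clamp_lip by simp
  next
    assume "t < 1" "\<not> t0 < 1"
    then show ?thesis unfolding path_def using clamp_lip2 by simp
  next
    assume "\<not> t < 1" "t0 < 1"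
    then show ?thesis unfolding path_def using clamp_lip2[of "e x" _ "e y"]
      by (simp add: abs_minus_commute)
  next
    assume "\<not> t < 1" "\<not> t0 < 1"
    then show ?thesis unfolding path_def by simp
  qed
qed

lemma path_bounds:
  assumes e: "\<And>x. 0 \<le> e x" and t: "0 \<le> t"
  shows "\<bar>path e t x\<bar> \<le> \<bar>e x\<bar>" "\<bar>path e t x - path e t y\<bar> \<le> \<bar>e x - e y\<bar>"
  using path_diff_bounds(1)[where e=e and t=t and t0=0 and x=x, OF e t order_refl] path_diff_bounds(2)[where e=e and t=t and t0=0 and x=x and y=y, OF e t order_refl] path0[where e=e, OF e] by simp_all

lemma path_lim:
  fixes X :: "nat \<Rightarrow> real"
  assumes t0: "t0 \<in> {0..1}" and X: "\<And>i. X i \<in> {0..1} - {t0}" "X \<longlonglongrightarrow> t0"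
  shows "(\<lambda>n. path e (X n) x - path e t0 x) \<longlonglongrightarrow> 0"
proof (cases "t0 < 1")
  case True
  have ev: "eventually (\<lambda>n. X n < 1) sequentially" using order_tendstoD(2)[OF X(2) True] .
  have "(\<lambda>n. min (e x) (X n / (1 - X n)) - min (e x) (t0 / (1 - t0))) \<longlonglongrightarrow>
        min (e x) (t0 / (1 - t0)) - min (e x) (t0 / (1 - t0))"
    using True by (intro tendsto_intros X(2)) auto
  then have "(\<lambda>n. min (e x) (X n / (1 - X n)) - min (e x) (t0 / (1 - t0))) \<longlonglongrightarrow> 0" by simp
  then show ?thesis
    by (rule Lim_transform_eventually) (use ev True in \<open>auto simp: path_def elim!: eventually_mono\<close>)
next
  case False
  then have t01: "t0 = 1" using t0 by auto
  have Xl: "X n < 1" for n using X(1)[of n] t01 by auto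
  define c where "c = max 0 (e x)"
  have c: "0 \<le> c" "e x \<le> c" by (auto simp: c_def)
  have "c / (1 + c) < 1" using c by simp
  then have ev: "eventually (\<lambda>n. c / (1 + c) < X n) sequentially"
    using order_tendstoD(1)[OF X(2)] t01 by simp
  have "eventually (\<lambda>n. path e (X n) x - path e t0 x = 0) sequentially"
    using ev
  proof eventually_elim
    case (elim n)
    have x1: "0 < 1 - X n" using Xl[of n] by simp
    have "c < X n * (1 + c)" using elim c by (simp add: divide_less_eq)
    then have "c * (1 - X n) < X n" by (simp add: algebra_simps)
    then have "c < X n / (1 - X n)" using x1 by (simp add: less_divide_eq)
    then show ?case using Xl[of n] t01 c by (simp add: path_def min_def)
  qed
  then show ?thesis by (rule tendsto_eventually)
qed

context gctx2
begin

lemma path_cont: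
  fixes e :: "'a::euclidean_space \<Rightarrow> real"
  assumes [measurable]: "e \<in> borel_measurable lborel" and fin: "rho GG s e < \<infinity>"
    and e: "\<And>x. 0 \<le> e x" and t0: "t0 \<in> {0..1}"
  shows "((\<lambda>t. sG_norm GG s (\<lambda>x. path e t x - path e t0 x)) \<longlongrightarrow> 0) (at t0 within {0..1})"
  unfolding tendsto_at_iff_sequentially comp_def
proof (intro allI impI)
  fix X :: "nat \<Rightarrow> real" assume X: "\<forall>i. X i \<in> {0..1} - {t0}" "X \<longlonglongrightarrow> t0"
  show "(\<lambda>n. sG_norm GG s (\<lambda>x. path e (X n) x - path e t0 x)) \<longlonglongrightarrow> 0"
  proof (rule LIMSEQ_I)
    fix r :: real assume r: "0 < r"
    have lim: "(\<lambda>n. rho GG s (\<lambda>x. (path e (X n) x - path e t0 x) / (r/2))) \<longlonglongrightarrow> 0"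
    proof (rule rho_dct[OF assms(1) _ fin])
      show "\<And>n. (\<lambda>x. path e (X n) x - path e t0 x) \<in> borel_measurable lborel" by measurable
      show "\<bar>path e (X n) x - path e t0 x\<bar> \<le> \<bar>e x\<bar>" for n x
        using path_diff_bounds(1)[OF e, of "X n" t0] X t0 by auto
      show "\<bar>(path e (X n) x - path e t0 x) - (path e (X n) y - path e t0 y)\<bar> \<le> \<bar>e x - e y\<bar>" for n x y
        using path_diff_bounds(2)[OF e, of "X n" t0] X t0 by auto
      show "(\<lambda>n. path e (X n) x - path e t0 x) \<longlonglongrightarrow> 0" for x
        by (rule path_lim[OF t0]) (use X in auto)
    qed (use r in auto)
    then have "eventually (\<lambda>n. rho GG s (\<lambda>x. (path e (X n) x - path e t0 x) / (r/2)) < 1) sequentially"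
      by (rule order_tendstoD) simp
    then obtain no where no: "\<And>n. no \<le> n \<Longrightarrow> rho GG s (\<lambda>x. (path e (X n) x - path e t0 x) / (r/2)) < 1"
      by (auto simp: eventually_sequentially)
    show "\<exists>no. \<forall>n\<ge>no. norm (sG_norm GG s (\<lambda>x. path e (X n) x - path e t0 x) - 0) < r"
    proof (intro exI allI impI)
      fix n assume "no \<le> n"
      then have "rho GG s (\<lambda>x. (path e (X n) x - path e t0 x) / (r/2)) \<le> 1" using no less_imp_le by blast
      from sG_norm_le[OF _ this] r
      show "norm (sG_norm GG s (\<lambda>x. path e (X n) x - path e t0 x) - 0) < r" by auto
    qed
  qed
qed

lemma path_rho0:
  fixes e :: "'a::euclidean_space \<Rightarrow> real"
  assumes [measurable]: "e \<in> borel_measurable lborel" and fin: "rho GG s e < \<infinity>"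
    and e: "\<And>x. 0 \<le> e x"
  shows "((\<lambda>t. rho GG s (path e t)) \<longlongrightarrow> 0) (at 0 within {0..1})"
  unfolding tendsto_at_iff_sequentially comp_def
proof (intro allI impI)
  fix X :: "nat \<Rightarrow> real" assume X: "\<forall>i. X i \<in> {0..1} - {0}" "X \<longlonglongrightarrow> 0"
  have "(\<lambda>n. rho GG s (\<lambda>x. (path e (X n) x - path e 0 x) / 1)) \<longlonglongrightarrow> 0"
  proof (rule rho_dct[OF assms(1) _ fin])
    show "\<And>n. (\<lambda>x. path e (X n) x - path e 0 x) \<in> borel_measurable lborel" by measurable
    show "\<bar>path e (X n) x - path e 0 x\<bar> \<le> \<bar>e x\<bar>" for n x
      using path_diff_bounds(1)[OF e, of "X n" 0] X by auto
    show "\<bar>(path e (X n) x - path e 0 x) - (path e (X n) y - path e 0 y)\<bar> \<le> \<bar>e x - e y\<bar>" for n x y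
      using path_diff_bounds(2)[OF e, of "X n" 0] X by auto
    show "(\<lambda>n. path e (X n) x - path e 0 x) \<longlonglongrightarrow> 0" for x
      by (rule path_lim) (use X in auto)
  qed simp
  then show "(\<lambda>n. rho GG s (path e (X n))) \<longlonglongrightarrow> 0" using path0[where e=e, OF e] by simp
qed

lemma path_W:
  fixes e :: "'a::euclidean_space \<Rightarrow> real"
  assumes [measurable]: "e \<in> borel_measurable lborel" and fin: "rho GG s e < \<infinity>"
    and e: "\<And>x. 0 \<le> e x" and t: "0 \<le> t"
  shows "rho GG s (path e t) \<le> rho GG s e" "path e t \<in> Wspace GG s"
proof -
  show r: "rho GG s (path e t) \<le> rho GG s e"
    by (rule rho_mono) (use path_bounds[where e=e and t=t, OF e t] in auto)
  show "path e t \<in> Wspace GG s" unfolding Wspace_def using r fin by auto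
qed

lemma path_Gamma:
  fixes e :: "'a::euclidean_space \<Rightarrow> real"
  assumes [measurable]: "e \<in> borel_measurable lborel" and fin: "rho GG s e < \<infinity>"
    and e: "\<And>x. 0 \<le> e x"
  shows "path e \<in> Gamma_paths g s e"
  unfolding Gamma_paths_def
  using path0[where e=e, OF e] path1 path_W(2)[OF assms] path_cont[OF assms] by auto

end


lemma eventually_within_mono:
  fixes a :: "'b::metric_space"
  assumes "eventually P (at a within S)" "\<And>x. x \<in> S \<Longrightarrow> P x \<Longrightarrow> Q x"
  shows "eventually Q (at a within S)"
  using assms unfolding eventually_at by blast

theorem lemma4p3:
  fixes g m f :: "real \<Rightarrow> real"
    and s p_minus p_plus m_minus m_plus \<theta> :: real
    and e :: "'a::euclidean_space \<Rightarrow> real"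
  assumes N2: "DIM('a) \<ge> 2"
    and s01: "0 < s" "s < 1"
    and g_young: "young_density g"
    and G1: "1 < p_minus" "\<forall>t>0. p_minus \<le> t * g t / prim g t \<and> t * g t / prim g t \<le> p_plus"
    and spN: "s * p_minus < real DIM('a)"
    and G2: "(\<integral>\<^sup>+ t\<in>{1..}. ennreal ((t / prim g t) powr (s / (real DIM('a) - s))) \<partial>lborel) = \<infinity>"
    and G3: "(\<integral>\<^sup>+ t\<in>{0..1}. ennreal ((t / prim g t) powr (s / (real DIM('a) - s))) \<partial>lborel) < \<infinity>"
    and f_cont: "continuous_on UNIV f"
    and f1: "((\<lambda>t. f t / g \<bar>t\<bar>) \<longlongrightarrow> 0) (at 0)"
    and m_cont: "continuous_on UNIV m"
    and m_young: "young_density m"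
    and m_bounds: "0 < m_minus" "\<forall>t>0. m_minus \<le> t * m t / prim m t \<and> t * m t / prim m t \<le> m_plus"
    and m_order: "p_plus < m_minus" "m_minus < m_plus"
        "m_plus < real DIM('a) * p_minus / (real DIM('a) - s * p_minus)"
    and f2: "\<exists>C. eventually (\<lambda>t. \<bar>f t\<bar> / m \<bar>t\<bar> \<le> C) at_infinity"
    and f3: "\<theta> > p_plus" "\<forall>t. t \<noteq> 0 \<longrightarrow> 0 < \<theta> * prim f t \<and> \<theta> * prim f t \<le> f t * t"
    and e_W: "e \<in> Wspace (prim g) s"
    and e_nonneg: "\<forall>x. 0 \<le> e x"
    and e_norm: "orlicz_norm (GNs g s (real DIM('a))) e > 0"
    and e_neg: "\<exists>lam0>0. \<forall>lam\<ge>lam0. I_fun g f s lam e < 0"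
  shows "((\<lambda>lam. mp_level g f s e lam) \<longlongrightarrow> 0) at_top"
proof -
  interpret gctx g using g_young by unfold_locales
  have pm: "p_minus \<le> p_plus" using G1(2) by (meson zero_less_one order_trans)
  interpret gctx1 g p_plus using G1(2) by unfold_locales auto
  interpret gctx2 g p_plus s using pm G1(1) s01 by unfold_locales auto
  interpret hctx g s "real DIM('a)" using s01 N2 G2 G3 by unfold_locales auto
  interpret fctx g f \<theta> using f_cont f1 f3 m_order pm G1(1) by unfold_locales auto
  have GNs_nn: "\<And>t. 0 \<le> t \<Longrightarrow> 0 \<le> GNs g s (real DIM('a)) t" by (rule GNs_nonneg)
  have GNs_0: "GNs g s (real DIM('a)) 0 = 0" by (rule GNs0)
  have e_meas[measurable]: "e \<in> borel_measurable lborel" and e_fin: "rho GG s e < \<infinity>"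
    using e_W by (auto simp: Wspace_def)
  have e0: "\<And>x. 0 \<le> e x" using e_nonneg by auto
  have I0: "I_fun g f s lam (\<lambda>x::'a. 0) = 0" for lam by (rule I_zero[OF GNs_0])

  have LB: "bdd_above ((\<lambda>t. I_fun g f s lam (\<gamma> t)) ` {0..1}) \<and> 0 \<le> (SUP t\<in>{0..1}. I_fun g f s lam (\<gamma> t))"
    if \<gamma>: "\<gamma> \<in> Gamma_paths g s e" and lam: "0 \<le> lam" for \<gamma> lam
  proof -
    have g0: "\<gamma> 0 = (\<lambda>x. 0)" and gW: "\<And>t. t \<in> {0..1} \<Longrightarrow> \<gamma> t \<in> Wspace GG s"
      and gc: "\<And>t0. t0 \<in> {0..1} \<Longrightarrow> ((\<lambda>t. sG_norm GG s (\<lambda>x. \<gamma> t x - \<gamma> t0 x)) \<longlongrightarrow> 0) (at t0 within {0..1})"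
      using \<gamma> unfolding Gamma_paths_def by auto
    have gm: "\<gamma> t \<in> borel_measurable lborel" "rho GG s (\<gamma> t) < \<infinity>" if "t \<in> {0..1}" for t
      using gW[OF that] by (auto simp: Wspace_def)
    have "\<exists>B<\<infinity>. \<forall>t\<in>{0..1}. rho GG s (\<gamma> t) \<le> B"
    proof (rule compact_local_bound)
      fix t0 :: real assume t0: "t0 \<in> {0..1}"
      show "rho GG s (\<gamma> t0) < \<infinity>" using gm[OF t0] by simp
      have ev: "eventually (\<lambda>t. sG_norm GG s (\<lambda>x. \<gamma> t x - \<gamma> t0 x) < 1) (at t0 within {0..1})"
        using order_tendstoD(2)[OF gc[OF t0]] by simp
      have "eventually (\<lambda>t. rho GG s (\<gamma> t) \<le> ennreal K2 * (1 + rho GG s (\<gamma> t0))) (at t0 within {0..1})"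
      proof (rule eventually_within_mono[OF ev])
        fix t assume t: "t \<in> {0..1}" and sm: "sG_norm GG s (\<lambda>x. \<gamma> t x - \<gamma> t0 x) < 1"
        note [measurable] = gm(1)[OF t] gm(1)[OF t0]
        have "rho GG s (\<lambda>x. \<gamma> t x - \<gamma> t0 x) \<le> ennreal K2 * (rho GG s (\<gamma> t) + rho GG s (\<gamma> t0))"
          by (rule rho_tri) (auto simp: abs_diff_le_iff)
        also have "\<dots> < \<infinity>" using gm(2)[OF t] gm(2)[OF t0] by (simp add: ennreal_mult_less_top ennreal_add_less_top)
        finally have "rho GG s (\<lambda>x. \<gamma> t x - \<gamma> t0 x) \<le> 1"
          by (intro small_norm_rho[OF _ _ sm]) auto
        have "rho GG s (\<gamma> t) \<le> ennreal K2 * (rho GG s (\<lambda>x. \<gamma> t x - \<gamma> t0 x) + rho GG s (\<gamma> t0))"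
          by (rule rho_tri) (auto simp: abs_diff_le_iff)
        also have "\<dots> \<le> ennreal K2 * (1 + rho GG s (\<gamma> t0))"
          using \<open>rho GG s (\<lambda>x. \<gamma> t x - \<gamma> t0 x) \<le> 1\<close> by (intro mult_left_mono add_right_mono) auto
        finally show "rho GG s (\<gamma> t) \<le> ennreal K2 * (1 + rho GG s (\<gamma> t0))" .
      qed
      moreover have "ennreal K2 * (1 + rho GG s (\<gamma> t0)) < \<infinity>"
        using gm(2)[OF t0] by (simp add: ennreal_mult_less_top ennreal_add_less_top)
      ultimately show "\<exists>b<\<infinity>. eventually (\<lambda>t. rho GG s (\<gamma> t) \<le> b) (at t0 within {0..1})" by blast
    qed
    then obtain B where B: "B < \<infinity>" "\<And>t. t \<in> {0..1} \<Longrightarrow> rho GG s (\<gamma> t) \<le> B" by blast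
    have Ib: "I_fun g f s lam (\<gamma> t) \<le> enn2real B" if t: "t \<in> {0..1}" for t
    proof -
      have "I_fun g f s lam (\<gamma> t) \<le> enn2real (rho GG s (\<gamma> t)) - lam * (\<integral>x. prim f (\<gamma> t x) \<partial>lborel)"
        by (rule I_bound[OF GNs_nn gm(2)[OF t]])
      moreover have "0 \<le> lam * (\<integral>x. prim f (\<gamma> t x) \<partial>lborel)"
        using lam by (intro mult_nonneg_nonneg Bochner_Integration.integral_nonneg) (auto intro: F_nonneg)
      moreover have "enn2real (rho GG s (\<gamma> t)) \<le> enn2real B"
        using B t by (intro enn2real_mono) (auto simp: less_top)
      ultimately show ?thesis by linarith
    qed
    have bdd: "bdd_above ((\<lambda>t. I_fun g f s lam (\<gamma> t)) ` {0..1})"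
      using Ib by (intro bdd_aboveI[of _ "enn2real B"]) auto
    have "I_fun g f s lam (\<gamma> 0) \<le> (SUP t\<in>{0..1}. I_fun g f s lam (\<gamma> t))"
      by (rule cSUP_upper[OF _ bdd]) simp
    then show ?thesis using bdd g0 I0 by simp
  qed

  have pG: "path e \<in> Gamma_paths g s e" by (rule path_Gamma[OF e_meas e_fin e0])

  have mp_le: "mp_level g f s e lam \<le> (SUP t\<in>{0..1}. I_fun g f s lam (path e t))"
    and mp_nonneg: "0 \<le> mp_level g f s e lam" if lam: "0 \<le> lam" for lam
  proof -
    have bb: "bdd_below ((\<lambda>\<gamma>. SUP t\<in>{0..1}. I_fun g f s lam (\<gamma> t)) ` Gamma_paths g s e)"
      using LB[OF _ lam] by (intro bdd_belowI[of _ 0]) auto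
    show "mp_level g f s e lam \<le> (SUP t\<in>{0..1}. I_fun g f s lam (path e t))"
      unfolding mp_level_def by (rule cINF_lower[OF bb pG])
    show "0 \<le> mp_level g f s e lam"
      unfolding mp_level_def using pG LB[OF _ lam] by (intro cINF_greatest) auto
  qed

  have e_nz: "\<not> (AE x in lborel. e x = 0)"
  proof
    assume ae: "AE x in lborel. e x = 0"
    have "{l. l > 0 \<and> (\<integral>\<^sup>+ x. ennreal (GNs g s (real DIM('a)) (\<bar>e x\<bar> / l)) \<partial>lborel) \<le> 1} = {0<..}"
    proof -
      have "(\<integral>\<^sup>+ x. ennreal (GNs g s (real DIM('a)) (\<bar>e x\<bar> / l)) \<partial>lborel) = 0" for l
        using ae by (subst nn_integral_cong_AE[where v="\<lambda>x. 0"]) (auto simp: GNs_0 elim!: AE_mp)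
      then show ?thesis by auto
    qed
    then have "orlicz_norm (GNs g s (real DIM('a))) e = 0" unfolding orlicz_norm_def by simp
    then show False using e_norm by simp
  qed

  have Gi: "integrable lborel (\<lambda>x. GG \<bar>e x\<bar>)"
  proof (rule integrableI_nonneg)
    show "(\<lambda>x. GG \<bar>e x\<bar>) \<in> borel_measurable lborel" by (rule G_comp_meas[OF gctx_axioms]) auto
    show "AE x in lborel. 0 \<le> GG \<bar>e x\<bar>" by (intro AE_I2 G_nonneg) simp
    have "Phi_G GG e < \<infinity>" using e_fin unfolding rho_def by (auto simp: top_unique)
    then show "(\<integral>\<^sup>+ x. ennreal (GG \<bar>e x\<bar>) \<partial>lborel) < \<infinity>" by (simp add: Phi_G_def)
  qed
  have Fi: "integrable lborel (\<lambda>x. prim f (min (e x) k))" if k: "0 < k" for k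
  proof -
    obtain C where C: "C > 0" "\<And>t. 0 \<le> t \<Longrightarrow> t \<le> k \<Longrightarrow> prim f t \<le> C * GG t" using F_le_G[OF k] by auto
    show ?thesis
    proof (rule Bochner_Integration.integrable_bound[OF integrable_mult_right[OF Gi, of C]])
      show "(\<lambda>x. prim f (min (e x) k)) \<in> borel_measurable lborel"
        by (rule F_comp_meas) (use e0 k in auto)
      show "AE x in lborel. norm (prim f (min (e x) k)) \<le> norm (C * GG \<bar>e x\<bar>)"
      proof (rule AE_I2)
        fix x
        have "prim f (min (e x) k) \<le> C * GG (min (e x) k)" using C e0[of x] k by auto
        also have "\<dots> \<le> C * GG \<bar>e x\<bar>" using C e0[of x] k by (intro mult_left_mono G_mono) auto
        finally show "norm (prim f (min (e x) k)) \<le> norm (C * GG \<bar>e x\<bar>)"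
          using F_nonneg[of "min (e x) k"] C G_nonneg[of "\<bar>e x\<bar>"] by simp
      qed
    qed
  qed
  have Fpos: "0 < (\<integral>x. prim f (min (e x) k) \<partial>lborel)" if k: "0 < k" for k
  proof -
    have nn: "0 \<le> (\<integral>x. prim f (min (e x) k) \<partial>lborel)"
      by (rule Bochner_Integration.integral_nonneg) (auto intro: F_nonneg)
    have "(\<integral>x. prim f (min (e x) k) \<partial>lborel) \<noteq> 0"
    proof
      assume "(\<integral>x. prim f (min (e x) k) \<partial>lborel) = 0"
      then have "AE x in lborel. prim f (min (e x) k) = 0"
        using integral_nonneg_eq_0_iff_AE[OF Fi[OF k]] F_nonneg by auto
      then have "AE x in lborel. e x = 0"
      proof (rule AE_mp[OF _ AE_I2], intro impI)
        fix x assume "prim f (min (e x) k) = 0"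
        then have "min (e x) k = 0" using F_pos by (metis less_irrefl)
        then show "e x = 0" using k e0[of x] by (simp add: min_def split: if_splits)
      qed
      with e_nz show False by simp
    qed
    with nn show ?thesis by simp
  qed
  have Fmono: "(\<integral>x. prim f (min (e x) k1) \<partial>lborel) \<le> (\<integral>x. prim f (min (e x) k) \<partial>lborel)"
    if "0 < k1" "k1 \<le> k" for k1 k
    using that by (intro integral_mono Fi F_mono) (auto simp: e0)

  have UB: "eventually (\<lambda>lam. mp_level g f s e lam \<le> \<epsilon>) at_top" if eps: "0 < \<epsilon>" for \<epsilon>
  proof -
    have "eventually (\<lambda>t. rho GG s (path e t) < ennreal \<epsilon>) (at 0 within {0..1})"
      using order_tendstoD(2)[OF path_rho0[OF e_meas e_fin e0]] eps by simp
    then obtain d where d: "0 < d" "\<And>t. t \<in> {0..1} \<Longrightarrow> t \<noteq> 0 \<Longrightarrow> dist t 0 < d \<Longrightarrow> rho GG s (path e t) < ennreal \<epsilon>"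
      unfolding eventually_at by blast
    define t1 where "t1 = min (d/2) (1/2)"
    have t1: "0 < t1" "t1 < d" "t1 < 1" using d by (auto simp: t1_def)
    define k1 where "k1 = t1 / (1 - t1)"
    have k1: "0 < k1" using t1 by (simp add: k1_def)
    define c where "c = (\<integral>x. prim f (min (e x) k1) \<partial>lborel)"
    have c: "0 < c" unfolding c_def by (rule Fpos[OF k1])
    define R where "R = enn2real (rho GG s e)"
    obtain lam0 where lam0: "0 < lam0" "\<And>lam. lam0 \<le> lam \<Longrightarrow> I_fun g f s lam e < 0" using e_neg by blast
    show ?thesis unfolding eventually_at_top_linorder
    proof (intro exI[of _ "max lam0 (R / c)"] allI impI)
      fix lam assume lamb: "max lam0 (R / c) \<le> lam"
      have lam: "0 \<le> lam" "lam0 \<le> lam" "R / c \<le> lam" using lamb lam0 by auto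
      have Rc: "R \<le> lam * c" using lam(3) c by (simp add: divide_le_eq mult.commute)
      have each: "I_fun g f s lam (path e t) \<le> \<epsilon>" if t: "t \<in> {0..1}" for t
      proof -
        have rp: "rho GG s (path e t) < \<infinity>" using path_W(1)[OF e_meas e_fin e0, of t] e_fin t by auto
        have Ib: "I_fun g f s lam (path e t) \<le> enn2real (rho GG s (path e t)) - lam * (\<integral>x. prim f (path e t x) \<partial>lborel)"
          by (rule I_bound[OF GNs_nn rp])
        have Fn: "0 \<le> lam * (\<integral>x. prim f (path e t x) \<partial>lborel)"
          using lam by (intro mult_nonneg_nonneg Bochner_Integration.integral_nonneg) (auto intro: F_nonneg)
        consider "t = 0" | "0 < t" "t \<le> t1" | "t1 < t" "t < 1" | "t = 1" using t by fastforce
        then show ?thesis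
        proof cases
          case 1 then show ?thesis using path0[where e=e, OF e0] I0 eps by simp
        next
          case 2
          have "rho GG s (path e t) < ennreal \<epsilon>" using d(2)[of t] 2 t1 t by auto
          then have "enn2real (rho GG s (path e t)) < \<epsilon>" using rp eps by (simp add: enn2real_less_iff)
          then show ?thesis using Ib Fn by linarith
        next
          case 3
          define k where "k = t / (1 - t)"
          have kk: "k1 \<le> k" unfolding k1_def k_def using 3 t1 by (intro frac_le) auto
          have pe: "path e t = (\<lambda>x. min (e x) k)" using 3 by (simp add: path_def k_def)
          have "c \<le> (\<integral>x. prim f (path e t x) \<partial>lborel)" unfolding pe c_def by (rule Fmono[OF k1 kk])
          then have "lam * c \<le> lam * (\<integral>x. prim f (path e t x) \<partial>lborel)" using lam by (intro mult_left_mono) auto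
          moreover have "enn2real (rho GG s (path e t)) \<le> R"
            unfolding R_def using path_W(1)[OF e_meas e_fin e0, of t] e_fin 3 t1 by (intro enn2real_mono) auto
          ultimately show ?thesis using Ib Rc eps by linarith
        next
          case 4 then show ?thesis using lam0(2)[OF lam(2)] eps by (simp add: path1)
        qed
      qed
      have "(SUP t\<in>{0..1}. I_fun g f s lam (path e t)) \<le> \<epsilon>"
        by (rule cSUP_least) (auto intro: each)
      then show "mp_level g f s e lam \<le> \<epsilon>" using mp_le[OF lam(1)] by linarith
    qed
  qed

  show ?thesis
  proof (rule tendstoI)
    fix \<epsilon> :: real assume eps: "0 < \<epsilon>"
    have "eventually (\<lambda>lam. mp_level g f s e lam \<le> \<epsilon>/2) at_top" using UB[of "\<epsilon>/2"] eps by linarith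
    moreover have "eventually (\<lambda>lam::real. 0 \<le> lam) at_top" by (rule eventually_ge_at_top)
    ultimately show "eventually (\<lambda>lam. dist (mp_level g f s e lam) 0 < \<epsilon>) at_top"
    proof eventually_elim
      case (elim lam)
      then show ?case using mp_nonneg[of lam] eps by (simp add: dist_real_def)
    qed
  qed
qed


end
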